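(* Let $\lambda_1\in\mathrm{Dyck}(2n_1)$, $\lambda_2\in\mathrm{Dyck}(2n_2)$, $\lambda=\lambda_1*\lambda_2$, let $a,b,i\ge0$ be integers, $\mu_1\in L(\lambda_1;a,i)$, $\mu_2\in L(\lambda_2;i,b)$ and $\mu=\mu_1*\mu_2$ (so $\mu\in L(\lambda;a,b)$). Then there is a bijection $\phi:\mathcal{TD}(\lambda/\mu)\to \mathcal{TD}(\lambda_1/\mu_1)\times\mathcal{TD}(\lambda_2/\mu_2)$ such that if $\phi(T)=(T_1,T_2)$ then $\|T\|=\|T_1\|+\|T_2\|$.
   Context: A Dyck path of length $2n$ is a lattice path from $(0,0)$ to $(n,n)$ with up steps $(0,1)$ and down steps $(1,0)$ never going below $y=x$; $\mathrm{Dyck}(2n)$ is their set. For lattice paths $\nu,\rho$, $\nu*\rho$ is the path obtained by translating $\rho$ so that its starting point is the endpoint of $\nu$ and concatenating. For $\lambda\in\mathrm{Dyck}(2n)$ and integers $a,b\ge0$, let $O=(0,0)$, $N=(n,n)$, $A=O+(-a,a)$, $B=N+(-b,b)$, and $L(\lambda;a,b)$ the set of lattice paths with steps $(0,1),(1,0)$ from $A$ to $B$ never going below $\lambda$. For $\mu\in L(\lambda;a,b)$, $\lambda/\mu$ is the region bounded by $\lambda$, $\mu$ and the segments $OA$, $NB$. A Dyck tile is an edge-connected set of unit cells with no $2\times2$ block whose cell centers, joined by unit up/right moves, form a translated Dyck path; its length is the length of that path. A truncated Dyck tile is obtained from a Dyck tile of positive length by cutting its northeast and southwest cells along their diagonals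 of slope $-1$ and removing the northeast half of the northeast cell and the southwest half of the southwest cell; its half-length is half the length of the original Dyck tile. A truncated Dyck tiling of $\lambda/\mu$ is a set $T$ of truncated Dyck tiles with disjoint interiors contained in $\lambda/\mu$ such that (i) for each $\eta\in T$, if $(\eta+(1,-1))\cap\lambda/\mu$ has nonempty interior then another tile of $T$ contains $\eta+(1,-1)$, and (ii) no two tiles share a border segment of slope $-1$. $\mathcal{TD}(\lambda/\mu)$ is their set; $\|T\|$ is the sum of the half-lengths of the tiles of $T$. *)

theory Defs
  imports Main
begin

text \<open>Lattice paths are lists of steps: True = up step (0,1), False = right step (1,0).
  Concatenation of paths (the operation *) is list append.\<close>

definition nups :: "bool list \<Rightarrow> nat" where
  "nups w = length (filter id w)"

definition nrights :: "bool list \<Rightarrow> nat" where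
  "nrights w = length (filter Not w)"

definition is_dyck :: "bool list \<Rightarrow> bool" where
  "is_dyck w \<longleftrightarrow> (\<forall>j\<le>length w. nrights (take j w) \<le> nups (take j w))
                  \<and> nups w = nrights w"

definition Dyck :: "nat \<Rightarrow> bool list set" where
  "Dyck m = {w. is_dyck w \<and> length w = m}"

text \<open>Height y - x after t steps of a path started on the line y = x.
  A path started at (-a,a) has height 2a + ht w t.  Points after t steps of any
  two paths started on the antidiagonal x + y = 0 lie on the same antidiagonal
  x + y = t, so "never going below" is the pointwise comparison of heights.\<close>
definition ht :: "bool list \<Rightarrow> nat \<Rightarrow> int" where
  "ht w t = int (nups (take t w)) - int (nrights (take t w))"

text \<open>L(lam; a, b): paths from A = (-a,a) to B = N + (-b,b) never below lam.\<close>
definition Lpaths :: "bool list \<Rightarrow> nat \<Rightarrow> nat \<Rightarrow> bool list set" where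
  "Lpaths lam a b = {mu. length mu = length lam
       \<and> 2 * int a + ht mu (length mu) = 2 * int b
       \<and> (\<forall>t\<le>length lam. ht lam t \<le> 2 * int a + ht mu t)}"

text \<open>Half-cells: ((x,y), False) is the south-west half and ((x,y), True) the north-east
  half of the unit cell [x,x+1] x [y,y+1], cut along its diagonal of slope -1.
  All regions and truncated tiles considered are unions of half-cells; a region is
  identified with the set of half-cells it contains (interiors disjoint iff half-cell sets
  disjoint).\<close>
type_synonym halfcell = "(int \<times> int) \<times> bool"

text \<open>The region lam/mu, where mu starts at (-a,a): a half-cell belongs to it iff it lies
  between lam and mu and between the antidiagonals x+y = 0 (segment OA) and
  x+y = length lam (segment NB).  A SW half of cell (x,y) spans the strip
  x+y <= s <= x+y+1, with apex at height h = y-x on the lower antidiagonal and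
  heights h-1..h+1 on the upper one; a NE half spans x+y+1 <= s <= x+y+2 the other way.\<close>
definition region :: "bool list \<Rightarrow> nat \<Rightarrow> bool list \<Rightarrow> halfcell set" where
  "region lam a mu = {((x,y),ne).
     (let t = x + y + (if ne then 1 else 0); h = y - x;
          L = (\<lambda>s. ht lam s); M = (\<lambda>s. 2 * int a + ht mu s) in
      0 \<le> t \<and> t < int (length lam) \<and>
      (if \<not> ne then L (nat t) \<le> h \<and> L (nat t + 1) \<le> h - 1 \<and> h \<le> M (nat t) \<and> h + 1 \<le> M (nat t + 1)
       else L (nat t) \<le> h - 1 \<and> L (nat t + 1) \<le> h \<and> h + 1 \<le> M (nat t) \<and> h \<le> M (nat t + 1)))}"

definition pcell :: "int \<times> int \<Rightarrow> bool list \<Rightarrow> nat \<Rightarrow> int \<times> int" where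
  "pcell c w j = (fst c + int (nrights (take j w)), snd c + int (nups (take j w)))"

text \<open>Dyck tile: set of cells whose centres form a translated Dyck path w starting at c
  (such a set is automatically edge-connected without 2x2 block).\<close>
definition dyck_tile :: "(int \<times> int) set \<Rightarrow> bool" where
  "dyck_tile D \<longleftrightarrow> (\<exists>c w. is_dyck w \<and> D = {pcell c w j | j. j \<le> length w})"

text \<open>Truncated Dyck tile from the Dyck tile with path w (positive length) starting at c:
  remove the SW half of the first (south-west) cell and the NE half of the last
  (north-east) cell.\<close>
definition trunc_tile :: "int \<times> int \<Rightarrow> bool list \<Rightarrow> halfcell set" where
  "trunc_tile c w = {(pcell c w j, False) | j. 1 \<le> j \<and> j \<le> length w}
                  \<union> {(pcell c w j, True) | j. j < length w}"

definition is_ttile_hl :: "halfcell set \<Rightarrow> nat \<Rightarrow> bool" where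
  "is_ttile_hl eta k \<longleftrightarrow> (\<exists>c w. is_dyck w \<and> length w = 2 * k \<and> 0 < k \<and> eta = trunc_tile c w)"

definition is_ttile :: "halfcell set \<Rightarrow> bool" where
  "is_ttile eta \<longleftrightarrow> (\<exists>k. is_ttile_hl eta k)"

definition half_length :: "halfcell set \<Rightarrow> nat" where
  "half_length eta = (THE k. is_ttile_hl eta k)"

definition shift_se :: "halfcell set \<Rightarrow> halfcell set" where
  "shift_se eta = (\<lambda>((x,y),ne). ((x + 1, y - 1), ne)) ` eta"

text \<open>The diagonal (slope -1) of cell c is a border segment of eta iff exactly one of the
  two halves of c belongs to eta.\<close>
definition diag_border :: "halfcell set \<Rightarrow> int \<times> int \<Rightarrow> bool" where
  "diag_border eta c \<longleftrightarrow> ((c, False) \<in> eta) \<noteq> ((c, True) \<in> eta)"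

definition TD :: "bool list \<Rightarrow> nat \<Rightarrow> bool list \<Rightarrow> halfcell set set set" where
  "TD lam a mu = {T.
      (\<forall>eta\<in>T. is_ttile eta \<and> eta \<subseteq> region lam a mu)
    \<and> (\<forall>eta\<in>T. \<forall>eta'\<in>T. eta \<noteq> eta' \<longrightarrow> eta \<inter> eta' = {})
    \<and> (\<forall>eta\<in>T. shift_se eta \<inter> region lam a mu \<noteq> {} \<longrightarrow>
          (\<exists>eta'\<in>T. eta' \<noteq> eta \<and> shift_se eta \<subseteq> eta'))
    \<and> (\<forall>eta\<in>T. \<forall>eta'\<in>T. eta \<noteq> eta' \<longrightarrow> \<not> (\<exists>c. diag_border eta c \<and> diag_border eta' c))}"

definition tnorm :: "halfcell set set \<Rightarrow> nat" where
  "tnorm T = (\<Sum>eta\<in>T. half_length eta)"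

end

theory Submission
  imports Defs
begin


lemma nups_Nil[simp]: "nups [] = 0" and nrights_Nil[simp]: "nrights [] = 0"
  by (simp_all add: nups_def nrights_def)
lemma nups_append: "nups (u @ v) = nups u + nups v"
  by (simp add: nups_def)
lemma nrights_append: "nrights (u @ v) = nrights u + nrights v"
  by (simp add: nrights_def)
lemma nups_nrights: "nups w + nrights w = length w"
  by (induction w) (auto simp: nups_def nrights_def)

lemma ht_append: "ht (u @ v) t = (if t \<le> length u then ht u t else ht u (length u) + ht v (t - length u))"
  by (auto simp: ht_def nups_append nrights_append)

lemma ht_ge: "length w \<le> t \<Longrightarrow> ht w t = ht w (length w)"
  by (simp add: ht_def)

lemma ht_take: "ht (take q w) t = ht w (min q t)"
  by (simp add: ht_def min.commute)

lemma ht_add: "ht w (q + t) = ht w q + ht (drop q w) t"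
  by (simp add: ht_def take_add nups_append nrights_append)

lemma ht_0[simp]: "ht w 0 = 0"
  by (simp add: ht_def)

lemma ht_Suc: "t < length w \<Longrightarrow> ht w (Suc t) = ht w t + (if w ! t then 1 else -1)"
  by (simp add: ht_def take_Suc_conv_app_nth nups_append nrights_append nups_def nrights_def)

lemma is_dyck_iff: "is_dyck w \<longleftrightarrow> (\<forall>t. 0 \<le> ht w t) \<and> ht w (length w) = 0"
proof
  assume d: "is_dyck w"
  have "0 \<le> ht w t" for t
  proof (cases "t \<le> length w")
    case True then show ?thesis using d by (auto simp: is_dyck_def ht_def)
  next
    case False then show ?thesis using d by (auto simp: is_dyck_def ht_def)
  qed
  moreover have "ht w (length w) = 0" using d by (simp add: is_dyck_def ht_def)
  ultimately show "(\<forall>t. 0 \<le> ht w t) \<and> ht w (length w) = 0" by blast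
next
  assume h: "(\<forall>t. 0 \<le> ht w t) \<and> ht w (length w) = 0"
  show "is_dyck w" unfolding is_dyck_def
  proof (intro conjI allI impI)
    fix j show "nrights (take j w) \<le> nups (take j w)" using h[THEN conjunct1, rule_format, of j] by (simp add: ht_def)
  next
    show "nups w = nrights w" using h by (simp add: ht_def)
  qed
qed

lemma dyck_nonneg: "is_dyck w \<Longrightarrow> 0 \<le> ht w t"
  by (simp add: is_dyck_iff)
lemma dyck_end: "is_dyck w \<Longrightarrow> ht w (length w) = 0"
  by (simp add: is_dyck_iff)

lemma ht_len: "ht w (length w) = int (nups w) - int (nrights w)"
  by (simp add: ht_def)

lemma dyck_even: "is_dyck w \<Longrightarrow> even (length w)"
proof -
  assume "is_dyck w"
  then have "nups w = nrights w" by (simp add: is_dyck_def)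
  with nups_nrights[of w] show ?thesis by presburger
qed

lemma dyck_take: "is_dyck w \<Longrightarrow> ht w q = 0 \<Longrightarrow> is_dyck (take q w)"
  unfolding is_dyck_iff by (auto simp: ht_take min_def)

lemma dyck_drop: "is_dyck w \<Longrightarrow> ht w q = 0 \<Longrightarrow> is_dyck (drop q w)"
proof -
  assume d: "is_dyck w" and h: "ht w q = 0"
  have "ht (drop q w) t = ht w (q + t)" for t using ht_add[of w q t] h by simp
  moreover have "ht w (q + length (drop q w)) = 0"
  proof (cases "q \<le> length w")
    case True then have "q + length (drop q w) = length w" by simp
    then show ?thesis using dyck_end[OF d] by simp
  next
    case False then have "q + length (drop q w) = q" by simp
    then show ?thesis using dyck_end[OF d] ht_ge[of w q] False by simp
  qed
  ultimately show ?thesis using d by (simp add: is_dyck_iff dyck_nonneg)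
qed

lemma dyck_append: "is_dyck u \<Longrightarrow> is_dyck v \<Longrightarrow> is_dyck (u @ v)"
  unfolding is_dyck_iff by (auto simp: ht_append)

lemma pcell_sum: "fst (pcell c w j) + snd (pcell c w j) = fst c + snd c + int (min j (length w))"
proof -
  have "nups (take j w) + nrights (take j w) = min j (length w)" using nups_nrights[of "take j w"] by simp
  then show ?thesis by (simp add: pcell_def)
qed

lemma pcell_diff: "snd (pcell c w j) - fst (pcell c w j) = snd c - fst c + ht w j"
  by (simp add: pcell_def ht_def)

lemma pcell_inj: "j \<le> length w \<Longrightarrow> j' \<le> length w \<Longrightarrow> pcell c w j = pcell c w j' \<Longrightarrow> j = j'"
proof -
  assume a: "j \<le> length w" "j' \<le> length w" "pcell c w j = pcell c w j'"
  have "fst c + snd c + int (min j (length w)) = fst c + snd c + int (min j' (length w))"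
    using pcell_sum[of c w j] pcell_sum[of c w j'] a(3) by metis
  then show ?thesis using a(1,2) by (simp add: min_absorb1)
qed

lemma pcell_0[simp]: "pcell c w 0 = c"
  by (simp add: pcell_def)

lemma pcell_drop: "pcell (pcell c w q) (drop q w) j = pcell c w (q + j)"
  by (simp add: pcell_def take_add nups_append nrights_append)

lemma pcell_transl: "pcell (fst c + dx, snd c + dy) w j = (fst (pcell c w j) + dx, snd (pcell c w j) + dy)"
  by (simp add: pcell_def)


definition st :: "halfcell \<Rightarrow> int" where
  "st hc = fst (fst hc) + snd (fst hc) + (if snd hc then 1 else 0)"
definition hgt :: "halfcell \<Rightarrow> int" where
  "hgt hc = snd (fst hc) - fst (fst hc)"
definition sh :: "halfcell \<Rightarrow> halfcell" where
  "sh hc = ((fst (fst hc) + 1, snd (fst hc) - 1), snd hc)"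
definition tr :: "int \<Rightarrow> halfcell \<Rightarrow> halfcell" where
  "tr d hc = ((fst (fst hc) + d, snd (fst hc) + d), snd hc)"

lemma st_sh[simp]: "st (sh hc) = st hc" by (simp add: st_def sh_def)
lemma hgt_sh[simp]: "hgt (sh hc) = hgt hc - 2" by (simp add: hgt_def sh_def)
lemma snd_sh[simp]: "snd (sh hc) = snd hc" by (simp add: sh_def)
lemma st_tr[simp]: "st (tr d hc) = st hc + 2 * d" by (simp add: st_def tr_def)
lemma hgt_tr[simp]: "hgt (tr d hc) = hgt hc" by (simp add: hgt_def tr_def)
lemma snd_tr[simp]: "snd (tr d hc) = snd hc" by (simp add: tr_def)
lemma tr_tr[simp]: "tr d (tr e hc) = tr (d + e) hc" by (simp add: tr_def)
lemma tr_0[simp]: "tr 0 hc = hc" by (simp add: tr_def)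
lemma tr_inj: "tr d x = tr d y \<Longrightarrow> x = y" by (auto simp: tr_def prod_eq_iff)
lemma sh_inj: "sh x = sh y \<Longrightarrow> x = y" by (auto simp: sh_def prod_eq_iff)
lemma sh_tr: "sh (tr d hc) = tr d (sh hc)" by (simp add: sh_def tr_def)
lemma sh_pair: "sh ((x,y),ne) = ((x+1,y-1),ne)" by (simp add: sh_def)
lemma tr_pair: "tr d ((x,y),ne) = ((x+d,y+d),ne)" by (simp add: tr_def)

lemma shift_se_eq: "shift_se eta = sh ` eta"
  unfolding shift_se_def sh_def by (rule image_cong) auto

lemma mem_trunc: "(p, ne) \<in> trunc_tile c w \<longleftrightarrow>
   (if ne then (\<exists>j<length w. p = pcell c w j) else (\<exists>j. 1 \<le> j \<and> j \<le> length w \<and> p = pcell c w j))"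
  by (auto simp: trunc_tile_def)

lemma st_pcell: "j \<le> length w \<Longrightarrow> st (pcell c w j, ne) = fst c + snd c + int j + (if ne then 1 else 0)"
  using pcell_sum[of c w j] by (simp add: st_def min_absorb1)

lemma hgt_pcell: "hgt (pcell c w j, ne) = snd c - fst c + ht w j"
  using pcell_diff[of c w j] by (simp add: hgt_def)

lemma pcell_take: "j \<le> q \<Longrightarrow> pcell c (take q w) j = pcell c w j"
  by (simp add: pcell_def min_absorb1)

lemma trunc_low: assumes "q \<le> length w"
  shows "trunc_tile c w \<inter> {hc. st hc \<le> fst c + snd c + int q} = trunc_tile c (take q w)"
proof (rule set_eqI)
  fix hc :: halfcell
  obtain p ne where hc: "hc = (p, ne)" by (cases hc)
  show "hc \<in> trunc_tile c w \<inter> {hc. st hc \<le> fst c + snd c + int q} \<longleftrightarrow> hc \<in> trunc_tile c (take q w)"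
  proof (cases ne)
    case True
    show ?thesis
    proof
      assume "hc \<in> trunc_tile c w \<inter> {hc. st hc \<le> fst c + snd c + int q}"
      then obtain j where j: "j < length w" "p = pcell c w j" "st (p,True) \<le> fst c + snd c + int q"
        using True hc by (auto simp: mem_trunc)
      then have "j < q" using st_pcell[of j w c True] by simp
      then show "hc \<in> trunc_tile c (take q w)" using j hc True assms
        by (auto simp: mem_trunc pcell_take intro!: exI[of _ j])
    next
      assume "hc \<in> trunc_tile c (take q w)"
      then obtain j where j: "j < q" "p = pcell c w j" using True hc assms by (auto simp: mem_trunc pcell_take)
      then have "st (p,True) \<le> fst c + snd c + int q" using st_pcell[of j w c True] assms by simp
      moreover have "j < length w" using j assms by simp
      ultimately show "hc \<in> trunc_tile c w \<inter> {hc. st hc \<le> fst c + snd c + int q}"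
        using j hc True by (simp add: mem_trunc) blast
    qed
  next
    case False
    show ?thesis
    proof
      assume "hc \<in> trunc_tile c w \<inter> {hc. st hc \<le> fst c + snd c + int q}"
      then obtain j where j: "1 \<le> j" "j \<le> length w" "p = pcell c w j" "st (p,False) \<le> fst c + snd c + int q"
        using False hc by (auto simp: mem_trunc)
      then have "j \<le> q" using st_pcell[of j w c False] by simp
      then show "hc \<in> trunc_tile c (take q w)" using j hc False assms
        by (auto simp: mem_trunc pcell_take intro!: exI[of _ j])
    next
      assume "hc \<in> trunc_tile c (take q w)"
      then obtain j where j: "1 \<le> j" "j \<le> q" "p = pcell c w j" using False hc assms by (auto simp: mem_trunc pcell_take)
      then have "st (p,False) \<le> fst c + snd c + int q" using st_pcell[of j w c False] assms by simp
      then show "hc \<in> trunc_tile c w \<inter> {hc. st hc \<le> fst c + snd c + int q}"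
        using j hc False assms by (auto simp: mem_trunc)
    qed
  qed
qed

lemma trunc_high: assumes "q \<le> length w"
  shows "trunc_tile c w - {hc. st hc \<le> fst c + snd c + int q} = trunc_tile (pcell c w q) (drop q w)"
proof (rule set_eqI)
  fix hc :: halfcell
  obtain p ne where hc: "hc = (p, ne)" by (cases hc)
  show "hc \<in> trunc_tile c w - {hc. st hc \<le> fst c + snd c + int q} \<longleftrightarrow> hc \<in> trunc_tile (pcell c w q) (drop q w)"
  proof (cases ne)
    case True
    show ?thesis
    proof
      assume "hc \<in> trunc_tile c w - {hc. st hc \<le> fst c + snd c + int q}"
      then obtain j where j: "j < length w" "p = pcell c w j" "\<not> st (p,True) \<le> fst c + snd c + int q"
        using True hc by (auto simp: mem_trunc)
      then have "q \<le> j" using st_pcell[of j w c True] by simp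
      then have "j - q < length (drop q w) \<and> p = pcell (pcell c w q) (drop q w) (j - q)"
        using j by (simp add: pcell_drop)
      then show "hc \<in> trunc_tile (pcell c w q) (drop q w)" using hc True by (auto simp: mem_trunc)
    next
      assume "hc \<in> trunc_tile (pcell c w q) (drop q w)"
      then obtain j where j: "j < length w - q" "p = pcell c w (q + j)" using True hc by (auto simp: mem_trunc pcell_drop)
      then have "\<not> st (p,True) \<le> fst c + snd c + int q" using st_pcell[of "q+j" w c True] by simp
      then show "hc \<in> trunc_tile c w - {hc. st hc \<le> fst c + snd c + int q}"
        using j hc True by (auto simp: mem_trunc intro!: exI[of _ "q+j"])
    qed
  next
    case False
    show ?thesis
    proof
      assume "hc \<in> trunc_tile c w - {hc. st hc \<le> fst c + snd c + int q}"
      then obtain j where j: "1 \<le> j" "j \<le> length w" "p = pcell c w j" "\<not> st (p,False) \<le> fst c + snd c + int q"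
        using False hc by (auto simp: mem_trunc)
      then have "q < j" using st_pcell[of j w c False] by simp
      then have "1 \<le> j - q \<and> j - q \<le> length (drop q w) \<and> p = pcell (pcell c w q) (drop q w) (j - q)"
        using j by (auto simp: pcell_drop)
      then show "hc \<in> trunc_tile (pcell c w q) (drop q w)" using hc False by (auto simp: mem_trunc)
    next
      assume "hc \<in> trunc_tile (pcell c w q) (drop q w)"
      then obtain j where j: "1 \<le> j" "j \<le> length w - q" "p = pcell c w (q + j)" using False hc by (auto simp: mem_trunc pcell_drop)
      then have "\<not> st (p,False) \<le> fst c + snd c + int q" using st_pcell[of "q+j" w c False] by simp
      then show "hc \<in> trunc_tile c w - {hc. st hc \<le> fst c + snd c + int q}"
        using j hc False by (auto simp: mem_trunc intro!: exI[of _ "q+j"])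
    qed
  qed
qed


definition mv :: "int \<Rightarrow> int \<Rightarrow> halfcell \<Rightarrow> halfcell" where
  "mv dx dy hc = ((fst (fst hc) + dx, snd (fst hc) + dy), snd hc)"

lemma trunc_as_image: "trunc_tile c w = (\<lambda>j. (pcell c w j, False)) ` {1..length w} \<union> (\<lambda>j. (pcell c w j, True)) ` {..<length w}"
  unfolding trunc_tile_def by auto

lemma trunc_mv: "mv dx dy ` trunc_tile c w = trunc_tile (fst c + dx, snd c + dy) w"
  unfolding trunc_as_image image_Un image_image by (simp add: mv_def pcell_transl)

lemma sh_mv: "sh = mv 1 (-1)" by (rule ext) (simp add: sh_def mv_def)
lemma tr_mv: "tr d = mv d d" by (rule ext) (simp add: tr_def mv_def)

lemma trunc_sh: "sh ` trunc_tile c w = trunc_tile (fst c + 1, snd c - 1) w"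
  using trunc_mv[of 1 "-1" c w] by (simp add: sh_mv)
lemma trunc_tr: "tr d ` trunc_tile c w = trunc_tile (fst c + d, snd c + d) w"
  using trunc_mv[of d d c w] by (simp add: tr_mv)

lemma finite_trunc[simp]: "finite (trunc_tile c w)"
  unfolding trunc_as_image by simp

lemma card_trunc: "card (trunc_tile c w) = 2 * length w"
proof -
  have i1: "inj_on (\<lambda>j. (pcell c w j, False)) {1..length w}"
    by (rule inj_onI) (metis atLeastAtMost_iff pcell_inj prod.inject)
  have i2: "inj_on (\<lambda>j. (pcell c w j, True)) {..<length w}"
    by (rule inj_onI) (metis lessThan_iff less_imp_le pcell_inj prod.inject)
  have d: "(\<lambda>j. (pcell c w j, False)) ` {1..length w} \<inter> (\<lambda>j. (pcell c w j, True)) ` {..<length w} = {}" by auto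
  show ?thesis unfolding trunc_as_image
    apply (subst card_Un_disjoint[OF _ _ d])
      apply simp
     apply simp
    apply (subst card_image[OF i1])
    apply (subst card_image[OF i2])
    apply simp
    done
qed

lemma trunc_nonempty: "w \<noteq> [] \<Longrightarrow> (c, True) \<in> trunc_tile c w"
  by (auto simp: mem_trunc intro!: exI[of _ 0])

lemma mem_trunc_pcell: assumes "(p, ne) \<in> trunc_tile c w" shows "\<exists>j \<le> length w. p = pcell c w j"
proof (cases ne)
  case True
  then obtain j where "j < length w" "p = pcell c w j" using assms by (auto simp: mem_trunc)
  then show ?thesis by (intro exI[of _ j]) auto
next
  case False
  then obtain j where "j \<le> length w" "p = pcell c w j" using assms by (auto simp: mem_trunc)
  then show ?thesis by (intro exI[of _ j]) auto
qed

lemma trunc_unique: assumes "(p, ne) \<in> trunc_tile c w" "(p', ne) \<in> trunc_tile c w" "st (p, ne) = st (p', ne)"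
  shows "p = p'"
proof -
  obtain j where j: "j \<le> length w" "p = pcell c w j"
    using mem_trunc_pcell[OF assms(1)] by blast
  obtain j' where j': "j' \<le> length w" "p' = pcell c w j'"
    using mem_trunc_pcell[OF assms(2)] by blast
  have "int j = int j'" using assms(3) j j' st_pcell[of j w c ne] st_pcell[of j' w c ne] by simp
  then show ?thesis using j j' by simp
qed

lemma is_ttile_iff: "is_ttile eta \<longleftrightarrow> (\<exists>c w. is_dyck w \<and> w \<noteq> [] \<and> eta = trunc_tile c w)"
proof
  assume "is_ttile eta" then show "\<exists>c w. is_dyck w \<and> w \<noteq> [] \<and> eta = trunc_tile c w"
    by (fastforce simp: is_ttile_def is_ttile_hl_def)
next
  assume "\<exists>c w. is_dyck w \<and> w \<noteq> [] \<and> eta = trunc_tile c w"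
  then obtain c w where cw: "is_dyck w" "w \<noteq> []" "eta = trunc_tile c w" by blast
  obtain k where "length w = 2 * k" using dyck_even[OF cw(1)] by (auto elim: evenE)
  moreover have "0 < k" using cw(2) \<open>length w = 2 * k\<close> by (cases k) auto
  ultimately show "is_ttile eta" using cw unfolding is_ttile_def is_ttile_hl_def
    apply (intro exI[of _ k] exI[of _ c])
    apply (cases c)
    apply auto
    done
qed

lemma ttile_hl_iff: "is_ttile_hl eta k \<longleftrightarrow> is_ttile eta \<and> k = card eta div 4"
proof
  assume h: "is_ttile_hl eta k"
  then obtain c w where "is_dyck w" "length w = 2 * k" "0 < k" "eta = trunc_tile c w"
    unfolding is_ttile_hl_def by blast
  then show "is_ttile eta \<and> k = card eta div 4" using h card_trunc[of c w]
    by (auto simp: is_ttile_def)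
next
  assume h: "is_ttile eta \<and> k = card eta div 4"
  then obtain k' where k': "is_ttile_hl eta k'" unfolding is_ttile_def by blast
  then obtain c w where "is_dyck w" "length w = 2 * k'" "0 < k'" "eta = trunc_tile c w"
    unfolding is_ttile_hl_def by blast
  then have "k' = k" using h card_trunc[of c w] by simp
  then show "is_ttile_hl eta k" using k' by simp
qed

lemma half_length_eq: "is_ttile eta \<Longrightarrow> half_length eta = card eta div 4"
  unfolding half_length_def ttile_hl_iff by auto

lemma card_ttile: "is_ttile eta \<Longrightarrow> card eta = 4 * (card eta div 4)"
  unfolding is_ttile_def is_ttile_hl_def using card_trunc by auto

lemma ttile_finite: "is_ttile eta \<Longrightarrow> finite eta"
  unfolding is_ttile_iff by auto

lemma ttile_nonempty: "is_ttile eta \<Longrightarrow> eta \<noteq> {}"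
  unfolding is_ttile_iff using trunc_nonempty by blast

lemma ttile_sh: "is_ttile eta \<Longrightarrow> is_ttile (sh ` eta)"
  unfolding is_ttile_iff using trunc_sh by metis

lemma ttile_tr: "is_ttile eta \<Longrightarrow> is_ttile (tr d ` eta)"
  unfolding is_ttile_iff using trunc_tr by metis

lemma ttile_unique: "is_ttile eta \<Longrightarrow> (p, ne) \<in> eta \<Longrightarrow> (p', ne) \<in> eta \<Longrightarrow> st (p, ne) = st (p', ne) \<Longrightarrow> p = p'"
  unfolding is_ttile_iff using trunc_unique by blast


definition okc :: "bool \<Rightarrow> int \<Rightarrow> int \<Rightarrow> int \<Rightarrow> int \<Rightarrow> int \<Rightarrow> bool" where
  "okc ne L0 L1 M0 M1 h = (if \<not> ne then L0 \<le> h \<and> L1 \<le> h - 1 \<and> h \<le> M0 \<and> h + 1 \<le> M1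
       else L0 \<le> h - 1 \<and> L1 \<le> h \<and> h + 1 \<le> M0 \<and> h \<le> M1)"

lemma region_iff: "hc \<in> region lam a mu \<longleftrightarrow> 0 \<le> st hc \<and> st hc < int (length lam) \<and>
   okc (snd hc) (ht lam (nat (st hc))) (ht lam (nat (st hc) + 1))
       (2 * int a + ht mu (nat (st hc))) (2 * int a + ht mu (nat (st hc) + 1)) (hgt hc)"
proof -
  obtain x y ne where hc: "hc = ((x,y),ne)" by (metis prod.collapse)
  have e: "nat (x + y + (if ne then 1 else 0)) + 1 = nat (x + y + (if ne then 1 else 0) + 1)" if "0 \<le> x + y + (if ne then 1 else 0)"
    using that by simp
  show ?thesis unfolding hc region_def okc_def st_def hgt_def Let_def
    by (auto simp: e)
qed

lemma ht_append2: "ht (u @ v) (length u + s) = ht u (length u) + ht v s"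
  using ht_add[of "u @ v" "length u" s] ht_append[of u v "length u"] by simp

lemma ht_step: "s < length w \<Longrightarrow> ht w (Suc s) = ht w s + 1 \<or> ht w (Suc s) = ht w s - 1"
  using ht_Suc[of s w] by auto

lemma ht_step_ge: "ht w s - 1 \<le> ht w (Suc s)"
  by (cases "s < length w") (use ht_step[of s w] ht_ge[of w "Suc s"] ht_ge[of w s] in auto)

lemma ht_step_ge': "ht w (Suc s) - 1 \<le> ht w s"
  by (cases "s < length w") (use ht_step[of s w] ht_ge[of w "Suc s"] ht_ge[of w s] in auto)

locale S =
  fixes lam1 lam2 mu1 mu2 :: "bool list" and n1 n2 a b i :: nat
  assumes D1: "lam1 \<in> Dyck (2 * n1)" and D2: "lam2 \<in> Dyck (2 * n2)"
    and M1: "mu1 \<in> Lpaths lam1 a i" and M2: "mu2 \<in> Lpaths lam2 i b"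
begin

abbreviation "lam \<equiv> lam1 @ lam2"
abbreviation "mu \<equiv> mu1 @ mu2"
abbreviation "m \<equiv> length lam1"
abbreviation "Rg \<equiv> region lam a mu"
abbreviation "R1 \<equiv> {hc. st hc < int m}"

lemma dy1: "is_dyck lam1" using D1 by (simp add: Dyck_def)
lemma dy2: "is_dyck lam2" using D2 by (simp add: Dyck_def)
lemma dy: "is_dyck lam" using dy1 dy2 by (rule dyck_append)
lemma m_eq: "m = 2 * n1" using D1 by (simp add: Dyck_def)
lemma len_mu1: "length mu1 = m" using M1 by (simp add: Lpaths_def)
lemma len_mu2: "length mu2 = length lam2" using M2 by (simp add: Lpaths_def)
lemma mu1_end: "2 * int a + ht mu1 m = 2 * int i" using M1 len_mu1 by (simp add: Lpaths_def)

lemma L_low: "s \<le> m \<Longrightarrow> ht lam s = ht lam1 s" by (simp add: ht_append)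
lemma M_low: "s \<le> m \<Longrightarrow> ht mu s = ht mu1 s" using len_mu1 by (simp add: ht_append)
lemma L_high: "ht lam (m + s) = ht lam2 s" using ht_append2[of lam1 lam2 s] dyck_end[OF dy1] by simp
lemma M_high: "2 * int a + ht mu (m + s) = 2 * int i + ht mu2 s"
  using ht_append2[of mu1 mu2 s] mu1_end len_mu1 by simp

lemma reg1: "hc \<in> Rg \<and> st hc < int m \<longleftrightarrow> hc \<in> region lam1 a mu1"
proof (cases "0 \<le> st hc \<and> st hc < int m")
  case True
  then have "nat (st hc) + 1 \<le> m" by linarith
  then show ?thesis using True unfolding region_iff by (simp add: L_low M_low)
next
  case False then show ?thesis unfolding region_iff by auto
qed

lemma reg2: "hc \<in> Rg \<and> \<not> st hc < int m \<longleftrightarrow> tr (- int n1) hc \<in> region lam2 i mu2"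
proof (cases "int m \<le> st hc")
  case True
  define s where "s = nat (st hc) - m"
  have s1: "nat (st hc) = m + s" using True s_def by linarith
  have s2: "nat (st hc) + 1 = m + (s + 1)" using s1 by simp
  have s3: "nat (st (tr (- int n1) hc)) = s" using True s_def m_eq by simp
  have s5: "nat (st hc - int m) = s" using True s_def by linarith
  have s4: "st (tr (- int n1) hc) = st hc - int m" using m_eq by simp
  show ?thesis unfolding region_iff using True
    apply (simp only: s1 s3 s4 s5 add.assoc L_high M_high hgt_tr snd_tr)
    apply auto
    done
next
  case False then show ?thesis unfolding region_iff using m_eq by simp
qed

lemma L_nonneg: "0 \<le> ht lam s" using dyck_nonneg[OF dy] .

lemma reg_hgt: "hc \<in> Rg \<Longrightarrow> 1 \<le> hgt hc"
  unfolding region_iff okc_def using L_nonneg by (auto split: if_splits) (smt (verit))+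

lemma lam1_last: assumes "1 \<le> m" shows "ht lam1 (m - 1) = 1"
proof -
  have "ht lam1 (Suc (m - 1)) = ht lam1 (m - 1) + 1 \<or> ht lam1 (Suc (m - 1)) = ht lam1 (m - 1) - 1"
    using ht_step[of "m - 1" lam1] assms by simp
  moreover have "Suc (m - 1) = m" using assms by simp
  ultimately show ?thesis using dyck_end[OF dy1] dyck_nonneg[OF dy1, of "m - 1"] by auto
qed

lemma lam2_first: assumes "lam2 \<noteq> []" shows "ht lam2 1 = 1"
  using ht_step[of 0 lam2] assms dyck_nonneg[OF dy2, of 1] by auto

lemma Lm: "ht lam m = 0" using L_low[of m] dyck_end[OF dy1] by simp
lemma Lm1: "1 \<le> m \<Longrightarrow> ht lam (m - 1) = 1" using L_low[of "m - 1"] lam1_last by simp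
lemma Lm2: "lam2 \<noteq> [] \<Longrightarrow> ht lam (m + 1) = 1" using L_high[of 1] lam2_first by simp

end


context S begin

lemma st_c: "st (c, ne) = fst c + snd c + (if ne then 1 else 0)" by (simp add: st_def)

lemma bnd_F_T: assumes b: "fst c + snd c = int m - 1" and F: "(c, False) \<in> Rg" and ne: "lam2 \<noteq> []"
  shows "(c, True) \<in> Rg"
proof -
  have stF: "st (c, False) = int m - 1" using b by (simp add: st_def)
  have stT: "st (c, True) = int m" using b by (simp add: st_def)
  have m1: "1 \<le> m" using F stF unfolding region_iff by (simp add: Suc_le_eq)
  have nF: "nat (st (c, False)) = m - 1" "nat (st (c, False)) + 1 = m" using stF m1 by auto
  have nT: "nat (st (c, True)) = m" "nat (st (c, True)) + 1 = Suc m" using stT by auto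
  have o: "okc False 1 0 (2 * int a + ht mu (m - 1)) (2 * int a + ht mu m) (hgt (c, False))"
    using F unfolding region_iff using nF Lm Lm1[OF m1] by simp
  have "ht mu m - 1 \<le> ht mu (Suc m)" by (rule ht_step_ge)
  moreover have "ht lam (Suc m) = 1" using Lm2[OF ne] by simp
  moreover have "int m < int (length lam)" using ne by simp
  ultimately show ?thesis unfolding region_iff using nT stT o Lm
    by (simp add: okc_def hgt_def)
qed

lemma bnd_T_F: assumes b: "fst c + snd c = int m - 1" and T: "(c, True) \<in> Rg" and m1: "1 \<le> m"
  shows "(c, False) \<in> Rg"
proof -
  have stF: "st (c, False) = int m - 1" using b by (simp add: st_def)
  have stT: "st (c, True) = int m" using b by (simp add: st_def)
  have nF: "nat (st (c, False)) = m - 1" "nat (st (c, False)) + 1 = m" using stF m1 by auto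
  have nT: "nat (st (c, True)) = m" "nat (st (c, True)) + 1 = Suc m" using stT by auto
  have o: "okc True 0 (ht lam (Suc m)) (2 * int a + ht mu m) (2 * int a + ht mu (Suc m)) (hgt (c, True))"
    using T unfolding region_iff using nT Lm by simp
  have sm: "Suc (m - 1) = m" using m1 by simp
  have "ht mu m - 1 \<le> ht mu (m - 1)" using ht_step_ge'[of mu "m - 1"] unfolding sm .
  moreover have "int m - 1 < int (length lam)" by simp
  moreover have "lam1 \<noteq> []" using m1 by auto
  ultimately show ?thesis unfolding region_iff using nF stF o Lm Lm1[OF m1] m1
    by (simp add: okc_def hgt_def)
qed

lemma base_hgt: assumes hc: "hc \<in> Rg" and F: "snd hc = False" and s: "st hc = int m - 1" and nsh: "sh hc \<notin> Rg"
  shows "hgt hc \<le> 1"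
proof -
  have m1: "1 \<le> m" using hc s unfolding region_iff by (simp add: Suc_le_eq)
  have n: "nat (st hc) = m - 1" "nat (st hc) + 1 = m" using s m1 by auto
  have o: "okc False 1 0 (2 * int a + ht mu (m - 1)) (2 * int a + ht mu m) (hgt hc)"
    using hc F unfolding region_iff using n Lm Lm1[OF m1] by simp
  have "\<not> okc False 1 0 (2 * int a + ht mu (m - 1)) (2 * int a + ht mu m) (hgt hc - 2)"
    using nsh hc F unfolding region_iff using n Lm Lm1[OF m1] by simp
  then have h3: "hgt hc < 3" using o by (auto simp: okc_def)
  obtain x y where xy: "hc = ((x, y), False)" using F by (metis prod.collapse)
  have "x + y = int m - 1" using s xy by (simp add: st_def)
  then have "odd (hgt hc)" using xy m_eq by (simp add: hgt_def) presburger
  then show ?thesis using h3 by presburger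
qed

end


definition TDR :: "halfcell set \<Rightarrow> halfcell set set set" where
  "TDR R = {T. (\<forall>eta\<in>T. is_ttile eta \<and> eta \<subseteq> R)
    \<and> (\<forall>eta\<in>T. \<forall>eta'\<in>T. eta \<noteq> eta' \<longrightarrow> eta \<inter> eta' = {})
    \<and> (\<forall>eta\<in>T. sh ` eta \<inter> R \<noteq> {} \<longrightarrow> (\<exists>eta'\<in>T. eta' \<noteq> eta \<and> sh ` eta \<subseteq> eta'))
    \<and> (\<forall>eta\<in>T. \<forall>eta'\<in>T. eta \<noteq> eta' \<longrightarrow> \<not> (\<exists>c. diag_border eta c \<and> diag_border eta' c))}"

lemma TD_TDR: "TD lam a mu = TDR (region lam a mu)"
  unfolding TD_def TDR_def shift_se_eq ..

lemma no_sh_sub: assumes "finite X" "X \<noteq> {}" "sh ` X \<subseteq> X" shows False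
proof -
  let ?f = "\<lambda>hc::halfcell. fst (fst hc)"
  have "finite (?f ` X)" "?f ` X \<noteq> {}" using assms by auto
  then obtain hc where hc: "hc \<in> X" "?f hc = Max (?f ` X)" by (metis (no_types, lifting) Max_in imageE)
  then have "sh hc \<in> X" using assms(3) by auto
  then have "?f (sh hc) \<le> Max (?f ` X)" using \<open>finite (?f ` X)\<close> by (intro Max_ge) auto
  then show False using hc by (simp add: sh_def)
qed

lemma tr_image_inv: "tr (- d) ` tr d ` X = X"
  by (simp add: image_image)

lemma diag_border_tr: "diag_border (tr d ` eta) c \<longleftrightarrow> diag_border eta (fst c - d, snd c - d)"
proof -
  have "(c, ne) \<in> tr d ` eta \<longleftrightarrow> ((fst c - d, snd c - d), ne) \<in> eta" for ne
  proof
    assume "(c, ne) \<in> tr d ` eta"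
    then obtain hc where "hc \<in> eta" "(c, ne) = tr d hc" by auto
    then show "((fst c - d, snd c - d), ne) \<in> eta" by (auto simp: tr_def)
  next
    assume h: "((fst c - d, snd c - d), ne) \<in> eta"
    have "(c, ne) = tr d ((fst c - d, snd c - d), ne)" by (simp add: tr_def)
    then show "(c, ne) \<in> tr d ` eta" using h by blast
  qed
  then show ?thesis by (simp add: diag_border_def)
qed

lemma inj_tr: "inj (tr d)" by (rule injI) (rule tr_inj)
lemma inj_sh: "inj (sh)" by (rule injI) (rule sh_inj)

lemma TDR_tr: assumes "T \<in> TDR R" shows "(\<lambda>eta. tr d ` eta) ` T \<in> TDR (tr d ` R)"
proof -
  have A1: "\<forall>eta\<in>T. is_ttile eta \<and> eta \<subseteq> R" using assms by (simp add: TDR_def)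
  have A2: "\<forall>eta\<in>T. \<forall>eta'\<in>T. eta \<noteq> eta' \<longrightarrow> eta \<inter> eta' = {}" using assms by (simp add: TDR_def)
  have A3: "\<forall>eta\<in>T. sh ` eta \<inter> R \<noteq> {} \<longrightarrow> (\<exists>eta'\<in>T. eta' \<noteq> eta \<and> sh ` eta \<subseteq> eta')" using assms by (simp add: TDR_def)
  have A4: "\<forall>eta\<in>T. \<forall>eta'\<in>T. eta \<noteq> eta' \<longrightarrow> \<not> (\<exists>c. diag_border eta c \<and> diag_border eta' c)" using assms by (simp add: TDR_def)
  have c1: "\<forall>eta\<in>(\<lambda>eta. tr d ` eta) ` T. is_ttile eta \<and> eta \<subseteq> tr d ` R"
  proof
    fix e assume "e \<in> (\<lambda>eta. tr d ` eta) ` T"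
    then obtain x where x: "x \<in> T" "e = tr d ` x" by blast
    then show "is_ttile e \<and> e \<subseteq> tr d ` R" using A1 ttile_tr by blast
  qed
  have c2: "\<forall>eta\<in>(\<lambda>eta. tr d ` eta) ` T. \<forall>eta'\<in>(\<lambda>eta. tr d ` eta) ` T. eta \<noteq> eta' \<longrightarrow> eta \<inter> eta' = {}"
  proof (intro ballI impI)
    fix e1 e2 assume "e1 \<in> (\<lambda>eta. tr d ` eta) ` T" "e2 \<in> (\<lambda>eta. tr d ` eta) ` T" "e1 \<noteq> e2"
    then obtain x y where xy: "x \<in> T" "y \<in> T" "e1 = tr d ` x" "e2 = tr d ` y" "x \<noteq> y" by blast
    then have "x \<inter> y = {}" using A2 by blast
    then show "e1 \<inter> e2 = {}" using xy image_Int[OF inj_tr[of d], of x y] by simp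
  qed
  have c3: "\<forall>eta\<in>(\<lambda>eta. tr d ` eta) ` T. sh ` eta \<inter> tr d ` R \<noteq> {} \<longrightarrow>
      (\<exists>eta'\<in>(\<lambda>eta. tr d ` eta) ` T. eta' \<noteq> eta \<and> sh ` eta \<subseteq> eta')"
  proof (intro ballI impI)
    fix e assume e: "e \<in> (\<lambda>eta. tr d ` eta) ` T" "sh ` e \<inter> tr d ` R \<noteq> {}"
    then obtain x where x: "x \<in> T" "e = tr d ` x" by blast
    have sx: "sh ` e = tr d ` (sh ` x)" unfolding x(2) image_image sh_tr ..
    have "tr d ` (sh ` x \<inter> R) \<noteq> {}" using e(2) unfolding sx image_Int[OF inj_tr[of d], of "sh ` x" R] .
    then have "sh ` x \<inter> R \<noteq> {}" by blast
    then obtain y where y: "y \<in> T" "y \<noteq> x" "sh ` x \<subseteq> y" using A3 x by blast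
    have "tr d ` y \<noteq> e" unfolding x(2) using y(2) inj_image_eq_iff[OF inj_tr[of d]] by metis
    moreover have "sh ` e \<subseteq> tr d ` y" unfolding sx using y(3) by (rule image_mono)
    ultimately show "\<exists>eta'\<in>(\<lambda>eta. tr d ` eta) ` T. eta' \<noteq> e \<and> sh ` e \<subseteq> eta'" using y(1) by blast
  qed
  have c4: "\<forall>eta\<in>(\<lambda>eta. tr d ` eta) ` T. \<forall>eta'\<in>(\<lambda>eta. tr d ` eta) ` T. eta \<noteq> eta' \<longrightarrow>
      \<not> (\<exists>c. diag_border eta c \<and> diag_border eta' c)"
  proof (intro ballI impI notI)
    fix e1 e2 assume "e1 \<in> (\<lambda>eta. tr d ` eta) ` T" "e2 \<in> (\<lambda>eta. tr d ` eta) ` T" "e1 \<noteq> e2"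
      and ex: "\<exists>c. diag_border e1 c \<and> diag_border e2 c"
    then obtain x y where xy: "x \<in> T" "y \<in> T" "e1 = tr d ` x" "e2 = tr d ` y" "x \<noteq> y" by blast
    obtain c where "diag_border e1 c" "diag_border e2 c" using ex by blast
    then have "diag_border x (fst c - d, snd c - d)" "diag_border y (fst c - d, snd c - d)"
      unfolding xy diag_border_tr by auto
    then show False using A4 xy by blast
  qed
  show ?thesis unfolding TDR_def using c1 c2 c3 c4 by blast
qed

definition Pc :: "halfcell set \<Rightarrow> halfcell set set \<Rightarrow> halfcell set set" where
  "Pc U T = {eta \<inter> U | eta. eta \<in> T \<and> eta \<inter> U \<noteq> {}}"

lemma Pc_mem: "P \<in> Pc U T \<longleftrightarrow> (\<exists>x\<in>T. P = x \<inter> U \<and> x \<inter> U \<noteq> {})"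
  unfolding Pc_def by blast

lemma Pc_TDR: assumes T: "T \<in> TDR R" and U: "sh ` U \<subseteq> U"
  and tiles: "\<And>eta. eta \<in> T \<Longrightarrow> eta \<inter> U \<noteq> {} \<Longrightarrow> is_ttile (eta \<inter> U)"
  shows "Pc U T \<in> TDR (R \<inter> U)"
proof -
  have A1: "\<forall>eta\<in>T. is_ttile eta \<and> eta \<subseteq> R" using T by (simp add: TDR_def)
  have A2: "\<forall>eta\<in>T. \<forall>eta'\<in>T. eta \<noteq> eta' \<longrightarrow> eta \<inter> eta' = {}" using T by (simp add: TDR_def)
  have A3: "\<forall>eta\<in>T. sh ` eta \<inter> R \<noteq> {} \<longrightarrow> (\<exists>eta'\<in>T. eta' \<noteq> eta \<and> sh ` eta \<subseteq> eta')" using T by (simp add: TDR_def)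
  have A4: "\<forall>eta\<in>T. \<forall>eta'\<in>T. eta \<noteq> eta' \<longrightarrow> \<not> (\<exists>c. diag_border eta c \<and> diag_border eta' c)" using T by (simp add: TDR_def)
  have c1: "\<forall>P\<in>Pc U T. is_ttile P \<and> P \<subseteq> R \<inter> U"
  proof
    fix P assume "P \<in> Pc U T"
    then obtain x where x: "x \<in> T" "P = x \<inter> U" "x \<inter> U \<noteq> {}" unfolding Pc_mem by blast
    have "is_ttile P" using tiles[OF x(1) x(3)] x(2) by simp
    moreover have "P \<subseteq> R \<inter> U" using A1 x(1,2) by blast
    ultimately show "is_ttile P \<and> P \<subseteq> R \<inter> U" ..
  qed
  have c2: "\<forall>P\<in>Pc U T. \<forall>P'\<in>Pc U T. P \<noteq> P' \<longrightarrow> P \<inter> P' = {}"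
  proof (intro ballI impI)
    fix P P' assume "P \<in> Pc U T" "P' \<in> Pc U T" "P \<noteq> P'"
    then obtain x y where xy: "x \<in> T" "y \<in> T" "P = x \<inter> U" "P' = y \<inter> U" unfolding Pc_mem by blast
    then have "x \<noteq> y" using \<open>P \<noteq> P'\<close> by blast
    then have "x \<inter> y = {}" using A2 xy by blast
    then show "P \<inter> P' = {}" using xy by blast
  qed
  have c3: "\<forall>P\<in>Pc U T. sh ` P \<inter> (R \<inter> U) \<noteq> {} \<longrightarrow> (\<exists>P'\<in>Pc U T. P' \<noteq> P \<and> sh ` P \<subseteq> P')"
  proof (intro ballI impI)
    fix P assume P: "P \<in> Pc U T" "sh ` P \<inter> (R \<inter> U) \<noteq> {}"
    then obtain x where x: "x \<in> T" "P = x \<inter> U" "x \<inter> U \<noteq> {}" unfolding Pc_mem by blast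
    have shPx: "sh ` P \<subseteq> sh ` x" unfolding x(2) by (rule image_mono) simp
    obtain z where z: "z \<in> sh ` P" "z \<in> R" using P(2) by blast
    have "z \<in> sh ` x \<inter> R" using z shPx by blast
    then have "sh ` x \<inter> R \<noteq> {}" by blast
    then obtain y where y: "y \<in> T" "y \<noteq> x" "sh ` x \<subseteq> y" using A3 x(1) by blast
    have "sh ` P \<subseteq> sh ` U" unfolding x(2) by (rule image_mono) simp
    then have "sh ` P \<subseteq> U" using U by (rule order_trans)
    moreover have "sh ` P \<subseteq> y" using shPx y(3) by (rule order_trans)
    ultimately have sub: "sh ` P \<subseteq> y \<inter> U" by (rule Int_greatest[rotated])
    have "P \<noteq> {}" using x(2,3) by simp
    then have "sh ` P \<noteq> {}" by simp
    then have "y \<inter> U \<noteq> {}" using sub by blast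
    then have yP: "y \<inter> U \<in> Pc U T" using y(1) unfolding Pc_mem by blast
    have "finite x" using x(1) A1 ttile_finite by blast
    then have "finite P" using x(2) by simp
    have neq: "y \<inter> U \<noteq> P"
    proof
      assume e: "y \<inter> U = P"
      have "sh ` P \<subseteq> P" using sub unfolding e .
      then show False by (rule no_sh_sub[OF \<open>finite P\<close> \<open>P \<noteq> {}\<close>])
    qed
    show "\<exists>P'\<in>Pc U T. P' \<noteq> P \<and> sh ` P \<subseteq> P'"
      using neq sub by (intro bexI[OF _ yP]) (rule conjI)
  qed
  have c4: "\<forall>P\<in>Pc U T. \<forall>P'\<in>Pc U T. P \<noteq> P' \<longrightarrow> \<not> (\<exists>c. diag_border P c \<and> diag_border P' c)"
  proof (intro ballI impI notI)
    fix P P' assume P: "P \<in> Pc U T" "P' \<in> Pc U T" "P \<noteq> P'" "\<exists>c. diag_border P c \<and> diag_border P' c"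
    then obtain x y where xy: "x \<in> T" "y \<in> T" "P = x \<inter> U" "P' = y \<inter> U" unfolding Pc_mem by blast
    then have "x \<noteq> y" using P(3) by blast
    then have dis: "x \<inter> y = {}" and nb: "\<not> (\<exists>c. diag_border x c \<and> diag_border y c)"
      using A2 A4 xy(1,2) by blast+
    obtain c where c: "diag_border P c" "diag_border P' c" using P(4) by blast
    show False
    proof (cases "(c, False) \<in> U")
      case cF: True
      show False
      proof (cases "(c, True) \<in> U")
        case cT: True
        have "diag_border x c" using c(1) cF cT unfolding xy(3) diag_border_def by blast
        moreover have "diag_border y c" using c(2) cF cT unfolding xy(4) diag_border_def by blast
        ultimately show False using nb by blast
      next
        case cT: False
        have "(c, False) \<in> P" using c(1) cT unfolding xy(3) diag_border_def by blast
        moreover have "(c, False) \<in> P'" using c(2) cT unfolding xy(4) diag_border_def by blast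
        ultimately show False using dis xy(3,4) by blast
      qed
    next
      case cF: False
      have "(c, True) \<in> P" using c(1) cF unfolding xy(3) diag_border_def by blast
      moreover have "(c, True) \<in> P'" using c(2) cF unfolding xy(4) diag_border_def by blast
      ultimately show False using dis xy(3,4) by blast
    qed
  qed
  show ?thesis unfolding TDR_def using c1 c2 c3 c4 by blast
qed

lemma TDR_finite: "finite R \<Longrightarrow> T \<in> TDR R \<Longrightarrow> finite T"
  unfolding TDR_def by (rule finite_subset[of _ "Pow R"]) auto

lemma tnorm_card: assumes "finite T" "\<forall>eta\<in>T. is_ttile eta" "\<forall>eta\<in>T. \<forall>eta'\<in>T. eta \<noteq> eta' \<longrightarrow> eta \<inter> eta' = {}"
  shows "4 * tnorm T = card (\<Union>T)"
proof -
  have "4 * tnorm T = (\<Sum>eta\<in>T. 4 * (card eta div 4))"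
    unfolding tnorm_def using assms(2) by (simp add: sum_distrib_left half_length_eq)
  also have "\<dots> = (\<Sum>eta\<in>T. card eta)"
    using assms(2) card_ttile by (intro sum.cong) auto
  also have "\<dots> = card (\<Union>T)"
    using assms by (intro card_Union_disjoint[symmetric]) (auto simp: pairwise_def disjnt_def ttile_finite)
  finally show ?thesis .
qed

lemma TDR_tnorm: "finite R \<Longrightarrow> T \<in> TDR R \<Longrightarrow> 4 * tnorm T = card (\<Union>T)"
  by (rule tnorm_card) (auto simp: TDR_finite TDR_def)

lemma ht_bound: "\<bar>ht w s\<bar> \<le> int (length w)"
proof -
  have "nups (take s w) + nrights (take s w) \<le> length w" using nups_nrights[of "take s w"] by simp
  then show ?thesis unfolding ht_def by linarith
qed

lemma region_finite: "finite (region lam a mu)"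
proof -
  define B where "B = 2 * int a + int (length lam) + int (length mu) + 2"
  let ?f = "\<lambda>hc::halfcell. (st hc, hgt hc, snd hc)"
  have inj: "inj_on ?f (region lam a mu)"
  proof (rule inj_onI)
    fix x y :: halfcell assume "?f x = ?f y"
    then show "x = y" by (auto simp: st_def hgt_def prod_eq_iff split: if_splits)
  qed
  have "?f ` region lam a mu \<subseteq> {0..<int (length lam)} \<times> {-B..B} \<times> UNIV"
  proof
    fix z assume "z \<in> ?f ` region lam a mu"
    then obtain hc where hc: "hc \<in> region lam a mu" "z = ?f hc" by blast
    note r = hc(1)[unfolded region_iff]
    have b1: "\<bar>ht lam s\<bar> \<le> int (length lam)" "\<bar>ht mu s\<bar> \<le> int (length mu)" for s by (rule ht_bound)+
    have "- B \<le> hgt hc \<and> hgt hc \<le> B" using r b1[of "nat (st hc)"] b1[of "nat (st hc) + 1"]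
      unfolding okc_def B_def by (auto split: if_splits simp: abs_le_iff)
    then show "z \<in> {0..<int (length lam)} \<times> {-B..B} \<times> UNIV" using r hc by auto
  qed
  then have "finite (?f ` region lam a mu)" by (rule finite_subset) auto
  then show ?thesis using finite_imageD inj by blast
qed


lemma st_trunc_range: "hc \<in> trunc_tile c w \<Longrightarrow> fst c + snd c + 1 \<le> st hc \<and> st hc \<le> fst c + snd c + int (length w)"
proof -
  assume h: "hc \<in> trunc_tile c w"
  obtain p ne where hc: "hc = (p, ne)" by (cases hc)
  show ?thesis
  proof (cases ne)
    case True
    then obtain j where "j < length w" "p = pcell c w j" using h hc by (auto simp: mem_trunc)
    then show ?thesis using hc True st_pcell[of j w c True] by simp
  next
    case False
    then obtain j where "1 \<le> j" "j \<le> length w" "p = pcell c w j" using h hc by (auto simp: mem_trunc)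
    then show ?thesis using hc False st_pcell[of j w c False] by simp
  qed
qed

context S begin

abbreviation "R2 \<equiv> {hc. \<not> st hc < int m}"

definition bnd :: "int \<times> int \<Rightarrow> bool" where "bnd c \<longleftrightarrow> fst c + snd c = int m - 1"

definition gl :: "halfcell set \<Rightarrow> halfcell set \<Rightarrow> bool" where
  "gl X Y \<longleftrightarrow> (\<exists>c. bnd c \<and> (c, False) \<in> X \<and> (c, True) \<in> Y)"

lemma TDR_A1: "T \<in> TDR R \<Longrightarrow> eta \<in> T \<Longrightarrow> is_ttile eta \<and> eta \<subseteq> R" by (simp add: TDR_def)
lemma TDR_A2: assumes "T \<in> TDR R" "eta \<in> T" "eta' \<in> T" "eta \<noteq> eta'" shows "eta \<inter> eta' = {}"
proof -
  have "\<forall>eta\<in>T. \<forall>eta'\<in>T. eta \<noteq> eta' \<longrightarrow> eta \<inter> eta' = {}"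
    using assms(1) unfolding TDR_def mem_Collect_eq by (elim conjE) assumption
  then show ?thesis using assms(2-4) by blast
qed
lemma TDR_A3: assumes "T \<in> TDR R" "eta \<in> T" "sh ` eta \<inter> R \<noteq> {}" shows "\<exists>eta'\<in>T. eta' \<noteq> eta \<and> sh ` eta \<subseteq> eta'"
proof -
  have "\<forall>eta\<in>T. sh ` eta \<inter> R \<noteq> {} \<longrightarrow> (\<exists>eta'\<in>T. eta' \<noteq> eta \<and> sh ` eta \<subseteq> eta')"
    using assms(1) unfolding TDR_def mem_Collect_eq by (elim conjE) assumption
  then show ?thesis using assms(2,3) by blast
qed
lemma TDR_A4: assumes "T \<in> TDR R" "eta \<in> T" "eta' \<in> T" "eta \<noteq> eta'" "diag_border eta c" "diag_border eta' c"
  shows False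
proof -
  have "\<forall>eta\<in>T. \<forall>eta'\<in>T. eta \<noteq> eta' \<longrightarrow> \<not> (\<exists>c. diag_border eta c \<and> diag_border eta' c)"
    using assms(1) unfolding TDR_def mem_Collect_eq by (elim conjE) assumption
  then show False using assms(2-6) by blast
qed

lemma descent: assumes T: "T \<in> TDR Rg"
  shows "\<forall>eta hc'. eta \<in> T \<longrightarrow> hc' \<in> eta \<longrightarrow> snd hc' = False \<longrightarrow> st hc' = int m - 1 \<longrightarrow> eta \<inter> R2 \<noteq> {}
     \<longrightarrow> nat (hgt hc') \<le> n \<longrightarrow> (\<forall>hc\<in>eta. hgt hc' \<le> hgt hc)"
proof (induction n)
  case 0
  show ?case
  proof (intro allI impI)
    fix eta hc' assume h: "eta \<in> T" "hc' \<in> eta" "nat (hgt hc') \<le> 0"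
    have "hc' \<in> Rg" using TDR_A1[OF T h(1)] h(2) by blast
    then have "1 \<le> hgt hc'" by (rule reg_hgt)
    then show "\<forall>hc\<in>eta. hgt hc' \<le> hgt hc" using h(3) by simp
  qed
next
  case (Suc n)
  show ?case
  proof (intro allI impI)
    fix eta hc' assume h: "eta \<in> T" "hc' \<in> eta" "snd hc' = False" "st hc' = int m - 1" "eta \<inter> R2 \<noteq> {}"
      "nat (hgt hc') \<le> Suc n"
    have sub: "eta \<subseteq> Rg" using TDR_A1[OF T h(1)] by blast
    show "\<forall>hc\<in>eta. hgt hc' \<le> hgt hc"
    proof (cases "sh ` eta \<inter> Rg = {}")
      case True
      then have "sh hc' \<notin> Rg" using h(2) by blast
      then have "hgt hc' \<le> 1" using base_hgt[of hc'] sub h by blast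
      then show ?thesis using sub reg_hgt by fastforce
    next
      case False
      then obtain eta' where e': "eta' \<in> T" "eta' \<noteq> eta" "sh ` eta \<subseteq> eta'" using TDR_A3[OF T h(1)] by blast
      have "sh hc' \<in> eta'" using e'(3) h(2) by blast
      moreover have "eta' \<inter> R2 \<noteq> {}"
      proof -
        obtain z where "z \<in> eta" "\<not> st z < int m" using h(5) by blast
        then have "sh z \<in> eta' \<inter> R2" using e'(3) by auto
        then show ?thesis by blast
      qed
      moreover have "nat (hgt (sh hc')) \<le> n" using h(6) by simp
      moreover have "snd (sh hc') = False" "st (sh hc') = int m - 1" using h(3,4) by simp_all
      ultimately have IH: "\<forall>hc\<in>eta'. hgt (sh hc') \<le> hgt hc"
        using Suc.IH[rule_format, of eta' "sh hc'"] e'(1) by blast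
      show ?thesis
      proof
        fix hc assume "hc \<in> eta"
        then have "sh hc \<in> eta'" using e'(3) by blast
        then show "hgt hc' \<le> hgt hc" using IH by fastforce
      qed
    qed
  qed
qed

lemma Hcross: assumes T: "T \<in> TDR Rg" and e: "eta \<in> T" and a: "eta \<inter> R1 \<noteq> {}" and b: "eta \<inter> R2 \<noteq> {}"
  shows "is_ttile (eta \<inter> R1) \<and> is_ttile (eta \<inter> R2) \<and> gl (eta \<inter> R1) (eta \<inter> R2)"
proof -
  obtain c w where cw: "is_dyck w" "w \<noteq> []" "eta = trunc_tile c w"
    using TDR_A1[OF T e] unfolding is_ttile_iff by blast
  define c0 where "c0 = fst c + snd c"
  obtain z1 where z1: "z1 \<in> eta" "st z1 < int m" using a by blast
  obtain z2 where z2: "z2 \<in> eta" "\<not> st z2 < int m" using b by blast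
  have r1: "c0 + 1 \<le> st z1" using st_trunc_range[of z1 c w] z1 cw c0_def by simp
  have r2: "st z2 \<le> c0 + int (length w)" using st_trunc_range[of z2 c w] z2 cw c0_def by simp
  define q where "q = nat (int m - 1 - c0)"
  have q1: "1 \<le> q" and q2: "q < length w" and q3: "c0 + int q = int m - 1"
    using r1 r2 z1 z2 unfolding q_def by linarith+
  define hc' where "hc' = (pcell c w q, False)"
  have hc'in: "hc' \<in> eta" unfolding hc'_def cw(3) mem_trunc using q1 q2 by auto
  have sthc': "st hc' = int m - 1" unfolding hc'_def using st_pcell[of q w c False] q2 q3 c0_def by simp
  have allh: "\<forall>hc\<in>eta. hgt hc' \<le> hgt hc"
  proof -
    have "eta \<in> T \<longrightarrow> hc' \<in> eta \<longrightarrow> snd hc' = False \<longrightarrow> st hc' = int m - 1 \<longrightarrow> eta \<inter> R2 \<noteq> {}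
     \<longrightarrow> nat (hgt hc') \<le> nat (hgt hc') \<longrightarrow> (\<forall>hc\<in>eta. hgt hc' \<le> hgt hc)"
      using descent[OF T, where n = "nat (hgt hc')"] by blast
    moreover have "snd hc' = False" by (simp add: hc'_def)
    ultimately show ?thesis using e hc'in sthc' b by blast
  qed
  have "(c, True) \<in> eta" using cw trunc_nonempty by blast
  then have "hgt hc' \<le> hgt (c, True)" using allh by blast
  then have "ht w q \<le> 0" unfolding hc'_def hgt_pcell by (simp add: hgt_def)
  then have hq: "ht w q = 0" using dyck_nonneg[OF cw(1), of q] by simp
  have lowset: "R1 = {hc. st hc \<le> fst c + snd c + int q}" using q3 c0_def by auto
  have A: "eta \<inter> R1 = trunc_tile c (take q w)" unfolding lowset cw(3) using trunc_low[of q w c] q2 by simp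
  have B: "eta \<inter> R2 = trunc_tile (pcell c w q) (drop q w)"
  proof -
    have "eta \<inter> R2 = eta - R1" by blast
    then show ?thesis unfolding lowset cw(3) using trunc_high[of q w c] q2 by simp
  qed
  have t1: "is_ttile (eta \<inter> R1)" unfolding A is_ttile_iff
    apply (rule exI[of _ c], rule exI[of _ "take q w"])
    using dyck_take[OF cw(1) hq] q1 q2 by auto
  have t2: "is_ttile (eta \<inter> R2)" unfolding B is_ttile_iff
    apply (rule exI[of _ "pcell c w q"], rule exI[of _ "drop q w"])
    using dyck_drop[OF cw(1) hq] q2 by auto
  have "bnd (pcell c w q)" unfolding bnd_def using pcell_sum[of c w q] q2 q3 c0_def by simp
  moreover have "(pcell c w q, False) \<in> trunc_tile c (take q w)" unfolding mem_trunc using q1 q2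
    by (auto simp: pcell_take intro!: exI[of _ q])
  moreover have "(pcell c w q, True) \<in> trunc_tile (pcell c w q) (drop q w)" unfolding mem_trunc using q2
    by (auto intro!: exI[of _ 0])
  ultimately have "gl (eta \<inter> R1) (eta \<inter> R2)" unfolding gl_def A B by blast
  then show ?thesis using t1 t2 by blast
qed

lemma glue_same: assumes T: "T \<in> TDR Rg" and e: "eta \<in> T" "eta' \<in> T" and g: "gl (eta \<inter> R1) (eta' \<inter> R2)"
  shows "eta = eta'"
proof (rule ccontr)
  assume ne: "eta \<noteq> eta'"
  obtain c where c: "(c, False) \<in> eta" "(c, True) \<in> eta'" using g unfolding gl_def by blast
  have dis: "eta \<inter> eta' = {}" using TDR_A2[OF T e ne] .
  have "diag_border eta c" using c dis unfolding diag_border_def by blast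
  moreover have "diag_border eta' c" using c dis unfolding diag_border_def by blast
  ultimately show False using TDR_A4[OF T e ne] by blast
qed

lemma merge: assumes X: "is_ttile X" "X \<subseteq> R1" and Y: "is_ttile Y" "Y \<subseteq> R2" and g: "gl X Y"
  shows "is_ttile (X \<union> Y)"
proof -
  obtain c1 w1 where cw1: "is_dyck w1" "w1 \<noteq> []" "X = trunc_tile c1 w1" using X unfolding is_ttile_iff by blast
  obtain c2 w2 where cw2: "is_dyck w2" "w2 \<noteq> []" "Y = trunc_tile c2 w2" using Y unfolding is_ttile_iff by blast
  obtain c where c: "bnd c" "(c, False) \<in> X" "(c, True) \<in> Y" using g unfolding gl_def by blast
  obtain j where j: "1 \<le> j" "j \<le> length w1" "c = pcell c1 w1 j" using c(2) cw1 by (auto simp: mem_trunc)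
  have "(pcell c1 w1 (length w1), False) \<in> X" unfolding cw1(3) mem_trunc using cw1(2)
    by (auto intro!: exI[of _ "length w1"] simp: Suc_le_eq)
  then have "st (pcell c1 w1 (length w1), False) < int m" using X(2) by blast
  then have l1: "fst c1 + snd c1 + int (length w1) < int m" using st_pcell[of "length w1" w1 c1 False] by simp
  have "st (c, False) = int m - 1" using c(1) by (simp add: bnd_def st_def)
  then have "fst c1 + snd c1 + int j = int m - 1" using st_pcell[of j w1 c1 False] j by simp
  then have jl: "j = length w1" using l1 j(2) by linarith
  obtain j' where j': "j' < length w2" "c = pcell c2 w2 j'" using c(3) cw2 by (auto simp: mem_trunc)
  have "(c2, True) \<in> Y" using cw2 trunc_nonempty by blast
  then have "\<not> st (c2, True) < int m" using Y(2) by blast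
  then have l2: "int m \<le> fst c2 + snd c2 + 1" by (simp add: st_def)
  have "st (c, True) = int m" using c(1) by (simp add: bnd_def st_def)
  then have "fst c2 + snd c2 + int j' + 1 = int m" using st_pcell[of j' w2 c2 True] j' by simp
  then have "j' = 0" using l2 by linarith
  then have cc2: "c2 = pcell c1 w1 (length w1)" using j' j jl by simp
  define w where "w = w1 @ w2"
  have dw: "is_dyck w" unfolding w_def using cw1(1) cw2(1) by (rule dyck_append)
  have tk: "take (length w1) w = w1" "drop (length w1) w = w2" unfolding w_def by simp_all
  have pc: "pcell c1 w (length w1) = pcell c1 w1 (length w1)"
    unfolding pcell_def using tk(1) by simp
  have lo: "trunc_tile c1 w \<inter> {hc. st hc \<le> fst c1 + snd c1 + int (length w1)} = X"
    using trunc_low[of "length w1" w c1] cw1(3) tk by (simp add: w_def)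
  have hi: "trunc_tile c1 w - {hc. st hc \<le> fst c1 + snd c1 + int (length w1)} = Y"
    using trunc_high[of "length w1" w c1] cw2(3) tk pc cc2 by (simp add: w_def)
  have "X \<union> Y = trunc_tile c1 w" using lo hi by blast
  moreover have "w \<noteq> []" using cw1(2) w_def by simp
  ultimately show ?thesis unfolding is_ttile_iff using dw by blast
qed

lemma uniqY: assumes X: "is_ttile X" and Q: "\<forall>Y\<in>Q. \<forall>Y'\<in>Q. Y \<noteq> Y' \<longrightarrow> Y \<inter> Y' = {}"
  and Y: "Y \<in> Q" "Y' \<in> Q" and g: "gl X Y" "gl X Y'" shows "Y = Y'"
proof -
  obtain c where c: "bnd c" "(c, False) \<in> X" "(c, True) \<in> Y" using g(1) unfolding gl_def by blast
  obtain c' where c': "bnd c'" "(c', False) \<in> X" "(c', True) \<in> Y'" using g(2) unfolding gl_def by blast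
  have "st (c, False) = st (c', False)" using c(1) c'(1) by (simp add: bnd_def st_def)
  then have "c = c'" using ttile_unique[OF X c(2) c'(2)] by simp
  then have "(c, True) \<in> Y \<inter> Y'" using c c' by blast
  then show ?thesis using Q Y by blast
qed

lemma uniqX: assumes Y: "is_ttile Y" and Q: "\<forall>X\<in>Q. \<forall>X'\<in>Q. X \<noteq> X' \<longrightarrow> X \<inter> X' = {}"
  and X: "X \<in> Q" "X' \<in> Q" and g: "gl X Y" "gl X' Y" shows "X = X'"
proof -
  obtain c where c: "bnd c" "(c, False) \<in> X" "(c, True) \<in> Y" using g(1) unfolding gl_def by blast
  obtain c' where c': "bnd c'" "(c', False) \<in> X'" "(c', True) \<in> Y" using g(2) unfolding gl_def by blast
  have "st (c, True) = st (c', True)" using c(1) c'(1) by (simp add: bnd_def st_def)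
  then have "c = c'" using ttile_unique[OF Y c(3) c'(3)] by simp
  then have "(c, False) \<in> X \<inter> X'" using c c' by blast
  then show ?thesis using Q X by blast
qed

end


context S begin

definition Psi :: "halfcell set set \<Rightarrow> halfcell set set \<Rightarrow> halfcell set set" where
  "Psi Q1 Q2 = {z. z \<noteq> {} \<and> (z \<inter> R1 = {} \<or> z \<inter> R1 \<in> Q1) \<and> (z \<inter> R2 = {} \<or> z \<inter> R2 \<in> Q2)
     \<and> (z \<inter> R1 \<noteq> {} \<longrightarrow> (\<forall>Y\<in>Q2. gl (z \<inter> R1) Y \<longleftrightarrow> Y = z \<inter> R2))
     \<and> (z \<inter> R2 \<noteq> {} \<longrightarrow> (\<forall>X\<in>Q1. gl X (z \<inter> R2) \<longleftrightarrow> X = z \<inter> R1))}"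

lemma psiI: "z \<noteq> {} \<Longrightarrow> (z \<inter> R1 = {} \<or> z \<inter> R1 \<in> Q1) \<Longrightarrow> (z \<inter> R2 = {} \<or> z \<inter> R2 \<in> Q2)
     \<Longrightarrow> (z \<inter> R1 \<noteq> {} \<Longrightarrow> \<forall>Y\<in>Q2. gl (z \<inter> R1) Y \<longleftrightarrow> Y = z \<inter> R2)
     \<Longrightarrow> (z \<inter> R2 \<noteq> {} \<Longrightarrow> \<forall>X\<in>Q1. gl X (z \<inter> R2) \<longleftrightarrow> X = z \<inter> R1) \<Longrightarrow> z \<in> Psi Q1 Q2"
  unfolding Psi_def mem_Collect_eq by blast

lemma psi_ne: "z \<in> Psi Q1 Q2 \<Longrightarrow> z \<noteq> {}" unfolding Psi_def by simp
lemma psi_A: "z \<in> Psi Q1 Q2 \<Longrightarrow> z \<inter> R1 \<noteq> {} \<Longrightarrow> z \<inter> R1 \<in> Q1" unfolding Psi_def by simp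
lemma psi_B: "z \<in> Psi Q1 Q2 \<Longrightarrow> z \<inter> R2 \<noteq> {} \<Longrightarrow> z \<inter> R2 \<in> Q2" unfolding Psi_def by simp
lemma psi_gA: "z \<in> Psi Q1 Q2 \<Longrightarrow> z \<inter> R1 \<noteq> {} \<Longrightarrow> Y \<in> Q2 \<Longrightarrow> gl (z \<inter> R1) Y \<longleftrightarrow> Y = z \<inter> R2"
  unfolding Psi_def mem_Collect_eq by (elim conjE) simp
lemma psi_gB: "z \<in> Psi Q1 Q2 \<Longrightarrow> z \<inter> R2 \<noteq> {} \<Longrightarrow> X \<in> Q1 \<Longrightarrow> gl X (z \<inter> R2) \<longleftrightarrow> X = z \<inter> R1"
  unfolding Psi_def mem_Collect_eq by (elim conjE) simp

lemma split_AB: "z = (z \<inter> R1) \<union> (z \<inter> R2)" by blast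

lemma gl_ne: "gl X Y \<Longrightarrow> X \<noteq> {} \<and> Y \<noteq> {}" unfolding gl_def by blast

lemma psi_phi: assumes T: "T \<in> TDR Rg" shows "Psi (Pc R1 T) (Pc R2 T) = T"
proof (rule set_eqI iffI)+
  fix z assume z: "z \<in> Psi (Pc R1 T) (Pc R2 T)"
  show "z \<in> T"
  proof (cases "z \<inter> R1 = {}")
    case False
    then obtain e where e: "e \<in> T" "z \<inter> R1 = e \<inter> R1" using psi_A[OF z False] unfolding Pc_mem by blast
    have "z \<inter> R2 = e \<inter> R2"
    proof (cases "e \<inter> R2 = {}")
      case False
      have "gl (e \<inter> R1) (e \<inter> R2)" using Hcross[OF T e(1)] False e(2) \<open>z \<inter> R1 \<noteq> {}\<close> by simp
      moreover have "e \<inter> R2 \<in> Pc R2 T" using e(1) False unfolding Pc_mem by blast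
      ultimately show ?thesis using psi_gA[OF z \<open>z \<inter> R1 \<noteq> {}\<close>, of "e \<inter> R2"] e(2) by simp
    next
      case True
      show ?thesis
      proof (rule ccontr)
        assume ne: "z \<inter> R2 \<noteq> e \<inter> R2"
        then have zB: "z \<inter> R2 \<noteq> {}" using True by simp
        then have zBin: "z \<inter> R2 \<in> Pc R2 T" by (rule psi_B[OF z])
        then obtain e' where e': "e' \<in> T" "z \<inter> R2 = e' \<inter> R2" unfolding Pc_mem by blast
        have "gl (z \<inter> R1) (z \<inter> R2)" using psi_gA[OF z \<open>z \<inter> R1 \<noteq> {}\<close> zBin] by simp
        then have "gl (e \<inter> R1) (e' \<inter> R2)" using e(2) e'(2) by simp
        then have "e = e'" by (rule glue_same[OF T e(1) e'(1)])
        then show False using ne e'(2) by simp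
      qed
    qed
    then have "z = e" using e(2) split_AB[of z] split_AB[of e] by metis
    then show ?thesis using e(1) by simp
  next
    case True
    then have zB: "z \<inter> R2 \<noteq> {}" using psi_ne[OF z] split_AB[of z] by auto
    obtain e where e: "e \<in> T" "z \<inter> R2 = e \<inter> R2" using psi_B[OF z zB] unfolding Pc_mem by blast
    have "e \<inter> R1 = {}"
    proof (rule ccontr)
      assume eA: "e \<inter> R1 \<noteq> {}"
      have "gl (e \<inter> R1) (e \<inter> R2)" using Hcross[OF T e(1) eA] zB e(2) by simp
      moreover have "e \<inter> R1 \<in> Pc R1 T" using e(1) eA unfolding Pc_mem by blast
      ultimately have "e \<inter> R1 = z \<inter> R1" using psi_gB[OF z zB, of "e \<inter> R1"] e(2) by simp
      then show False using eA True by simp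
    qed
    then have "z = e" using e(2) True split_AB[of z] split_AB[of e] by metis
    then show ?thesis using e(1) by simp
  qed
next
  fix z assume z: "z \<in> T"
  have tz: "is_ttile z" using TDR_A1[OF T z] by blast
  show "z \<in> Psi (Pc R1 T) (Pc R2 T)"
  proof (rule psiI)
    show "z \<noteq> {}" using ttile_nonempty[OF tz] .
    show "z \<inter> R1 = {} \<or> z \<inter> R1 \<in> Pc R1 T" using z unfolding Pc_mem by blast
    show "z \<inter> R2 = {} \<or> z \<inter> R2 \<in> Pc R2 T" using z unfolding Pc_mem by blast
  next
    assume zA: "z \<inter> R1 \<noteq> {}"
    show "\<forall>Y\<in>Pc R2 T. gl (z \<inter> R1) Y \<longleftrightarrow> Y = z \<inter> R2"
    proof
      fix Y assume "Y \<in> Pc R2 T"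
      then obtain e where e: "e \<in> T" "Y = e \<inter> R2" "e \<inter> R2 \<noteq> {}" unfolding Pc_mem by blast
      show "gl (z \<inter> R1) Y \<longleftrightarrow> Y = z \<inter> R2"
      proof
        assume "gl (z \<inter> R1) Y"
        then have "z = e" using glue_same[OF T z e(1)] e(2) by simp
        then show "Y = z \<inter> R2" using e(2) by simp
      next
        assume "Y = z \<inter> R2"
        then show "gl (z \<inter> R1) Y" using Hcross[OF T z zA] e(3) e(2) by simp
      qed
    qed
  next
    assume zB: "z \<inter> R2 \<noteq> {}"
    show "\<forall>X\<in>Pc R1 T. gl X (z \<inter> R2) \<longleftrightarrow> X = z \<inter> R1"
    proof
      fix X assume "X \<in> Pc R1 T"
      then obtain e where e: "e \<in> T" "X = e \<inter> R1" "e \<inter> R1 \<noteq> {}" unfolding Pc_mem by blast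
      show "gl X (z \<inter> R2) \<longleftrightarrow> X = z \<inter> R1"
      proof
        assume "gl X (z \<inter> R2)"
        then have "e = z" using glue_same[OF T e(1) z] e(2) by simp
        then show "X = z \<inter> R1" using e(2) by simp
      next
        assume "X = z \<inter> R1"
        then show "gl X (z \<inter> R2)" using Hcross[OF T z _ zB] e(3) e(2) by simp
      qed
    qed
  qed
qed

end


context S begin

lemma TDR_disj: "T \<in> TDR R \<Longrightarrow> \<forall>Y\<in>T. \<forall>Y'\<in>T. Y \<noteq> Y' \<longrightarrow> Y \<inter> Y' = {}"
  using TDR_A2 by blast

lemma sh_bnd: "sh (c, ne) = ((fst c + 1, snd c - 1), ne)" by (simp add: sh_def)
lemma bnd_sh: "bnd c \<Longrightarrow> bnd (fst c + 1, snd c - 1)" by (simp add: bnd_def)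

lemma rg_lam2: "(c, True) \<in> Rg \<Longrightarrow> bnd c \<Longrightarrow> lam2 \<noteq> []"
  unfolding region_iff by (auto simp: st_def bnd_def)
lemma rg_m1: "(c, False) \<in> Rg \<Longrightarrow> bnd c \<Longrightarrow> 1 \<le> m"
  unfolding region_iff by (auto simp: st_def bnd_def Suc_le_eq)

context
  fixes Q1 Q2 assumes Q1: "Q1 \<in> TDR (Rg \<inter> R1)" and Q2: "Q2 \<in> TDR (Rg \<inter> R2)"
begin

lemma q1t: "X \<in> Q1 \<Longrightarrow> is_ttile X \<and> X \<subseteq> Rg \<inter> R1" using TDR_A1[OF Q1] by blast
lemma q2t: "Y \<in> Q2 \<Longrightarrow> is_ttile Y \<and> Y \<subseteq> Rg \<inter> R2" using TDR_A1[OF Q2] by blast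

lemma ex_psi_X: assumes X: "X \<in> Q1" shows "\<exists>z\<in>Psi Q1 Q2. z \<inter> R1 = X"
proof (cases "\<exists>Y\<in>Q2. gl X Y")
  case True
  then obtain Y where Y: "Y \<in> Q2" "gl X Y" by blast
  have XR: "X \<subseteq> R1" using q1t[OF X] by blast
  have YR: "Y \<subseteq> R2" using q2t[OF Y(1)] by blast
  have zA: "(X \<union> Y) \<inter> R1 = X" using XR YR by blast
  have zB: "(X \<union> Y) \<inter> R2 = Y" using XR YR by blast
  have "X \<union> Y \<in> Psi Q1 Q2"
  proof (rule psiI)
    show "X \<union> Y \<noteq> {}" using gl_ne[OF Y(2)] by blast
    show "(X \<union> Y) \<inter> R1 = {} \<or> (X \<union> Y) \<inter> R1 \<in> Q1" using zA X by simp
    show "(X \<union> Y) \<inter> R2 = {} \<or> (X \<union> Y) \<inter> R2 \<in> Q2" using zB Y by simp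
    show "\<forall>Y'\<in>Q2. gl ((X \<union> Y) \<inter> R1) Y' \<longleftrightarrow> Y' = (X \<union> Y) \<inter> R2"
      unfolding zA zB
    proof (intro ballI iffI)
      fix Y' assume "Y' \<in> Q2" "gl X Y'"
      then show "Y' = Y" using uniqY[OF conjunct1[OF q1t[OF X]] TDR_disj[OF Q2] _ Y(1) _ Y(2)] by blast
    next
      fix Y' assume "Y' = Y" then show "gl X Y'" using Y(2) by simp
    qed
    show "\<forall>X'\<in>Q1. gl X' ((X \<union> Y) \<inter> R2) \<longleftrightarrow> X' = (X \<union> Y) \<inter> R1"
      unfolding zA zB
    proof (intro ballI iffI)
      fix X' assume "X' \<in> Q1" "gl X' Y"
      then show "X' = X" using uniqX[OF conjunct1[OF q2t[OF Y(1)]] TDR_disj[OF Q1] _ X _ Y(2)] by blast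
    next
      fix X' assume "X' = X" then show "gl X' Y" using Y(2) by simp
    qed
  qed
  then show ?thesis using zA by blast
next
  case False
  have XR: "X \<subseteq> R1" using q1t[OF X] by blast
  have zA: "X \<inter> R1 = X" and zB: "X \<inter> R2 = {}" using XR by blast+
  have "X \<in> Psi Q1 Q2"
  proof (rule psiI)
    show "X \<noteq> {}" using ttile_nonempty q1t[OF X] by blast
    show "X \<inter> R1 = {} \<or> X \<inter> R1 \<in> Q1" using zA X by simp
    show "X \<inter> R2 = {} \<or> X \<inter> R2 \<in> Q2" using zB by simp
    show "\<forall>Y\<in>Q2. gl (X \<inter> R1) Y \<longleftrightarrow> Y = X \<inter> R2"
    proof
      fix Y assume Y: "Y \<in> Q2"
      have "Y \<noteq> {}" using ttile_nonempty q2t[OF Y] by blast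
      have "\<not> gl X Y" using False Y by blast
      then show "gl (X \<inter> R1) Y \<longleftrightarrow> Y = X \<inter> R2" using \<open>Y \<noteq> {}\<close> unfolding zA zB by simp
    qed
    show "\<forall>X'\<in>Q1. gl X' (X \<inter> R2) \<longleftrightarrow> X' = X \<inter> R1" if "X \<inter> R2 \<noteq> {}" using that zB by simp
  qed
  then show ?thesis using zA by blast
qed

lemma ex_psi_Y: assumes Y: "Y \<in> Q2" shows "\<exists>z\<in>Psi Q1 Q2. z \<inter> R2 = Y"
proof (cases "\<exists>X\<in>Q1. gl X Y")
  case True
  then obtain X where X: "X \<in> Q1" "gl X Y" by blast
  have XR: "X \<subseteq> R1" using q1t[OF X(1)] by blast
  have YR: "Y \<subseteq> R2" using q2t[OF Y] by blast
  have zA: "(X \<union> Y) \<inter> R1 = X" using XR YR by blast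
  have zB: "(X \<union> Y) \<inter> R2 = Y" using XR YR by blast
  have "X \<union> Y \<in> Psi Q1 Q2"
  proof (rule psiI)
    show "X \<union> Y \<noteq> {}" using gl_ne[OF X(2)] by blast
    show "(X \<union> Y) \<inter> R1 = {} \<or> (X \<union> Y) \<inter> R1 \<in> Q1" using zA X by simp
    show "(X \<union> Y) \<inter> R2 = {} \<or> (X \<union> Y) \<inter> R2 \<in> Q2" using zB Y by simp
    show "\<forall>Y'\<in>Q2. gl ((X \<union> Y) \<inter> R1) Y' \<longleftrightarrow> Y' = (X \<union> Y) \<inter> R2"
      unfolding zA zB
    proof (intro ballI iffI)
      fix Y' assume "Y' \<in> Q2" "gl X Y'"
      then show "Y' = Y" using uniqY[OF conjunct1[OF q1t[OF X(1)]] TDR_disj[OF Q2] _ Y _ X(2)] by blast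
    next
      fix Y' assume "Y' = Y" then show "gl X Y'" using X(2) by simp
    qed
    show "\<forall>X'\<in>Q1. gl X' ((X \<union> Y) \<inter> R2) \<longleftrightarrow> X' = (X \<union> Y) \<inter> R1"
      unfolding zA zB
    proof (intro ballI iffI)
      fix X' assume "X' \<in> Q1" "gl X' Y"
      then show "X' = X" using uniqX[OF conjunct1[OF q2t[OF Y]] TDR_disj[OF Q1] _ X(1) _ X(2)] by blast
    next
      fix X' assume "X' = X" then show "gl X' Y" using X(2) by simp
    qed
  qed
  then show ?thesis using zB by blast
next
  case False
  have YR: "Y \<subseteq> R2" using q2t[OF Y] by blast
  have zA: "Y \<inter> R1 = {}" and zB: "Y \<inter> R2 = Y" using YR by blast+
  have "Y \<in> Psi Q1 Q2"
  proof (rule psiI)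
    show "Y \<noteq> {}" using ttile_nonempty q2t[OF Y] by blast
    show "Y \<inter> R1 = {} \<or> Y \<inter> R1 \<in> Q1" using zA by simp
    show "Y \<inter> R2 = {} \<or> Y \<inter> R2 \<in> Q2" using zB Y by simp
    show "\<forall>Y'\<in>Q2. gl (Y \<inter> R1) Y' \<longleftrightarrow> Y' = Y \<inter> R2" if "Y \<inter> R1 \<noteq> {}" using that zA by simp
    show "\<forall>X\<in>Q1. gl X (Y \<inter> R2) \<longleftrightarrow> X = Y \<inter> R1"
    proof
      fix X assume X: "X \<in> Q1"
      have "X \<noteq> {}" using ttile_nonempty q1t[OF X] by blast
      have "\<not> gl X Y" using False X by blast
      then show "gl X (Y \<inter> R2) \<longleftrightarrow> X = Y \<inter> R1" using \<open>X \<noteq> {}\<close> unfolding zA zB by simp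
    qed
  qed
  then show ?thesis using zB by blast
qed

lemma phi_psi1: "Pc R1 (Psi Q1 Q2) = Q1"
proof (rule set_eqI iffI)+
  fix P assume "P \<in> Pc R1 (Psi Q1 Q2)"
  then obtain z where z: "z \<in> Psi Q1 Q2" "P = z \<inter> R1" "z \<inter> R1 \<noteq> {}" unfolding Pc_mem by blast
  then show "P \<in> Q1" using psi_A by blast
next
  fix P assume P: "P \<in> Q1"
  obtain z where z: "z \<in> Psi Q1 Q2" "z \<inter> R1 = P" using ex_psi_X[OF P] by blast
  have "P \<noteq> {}" using ttile_nonempty q1t[OF P] by blast
  then show "P \<in> Pc R1 (Psi Q1 Q2)" using z unfolding Pc_mem by blast
qed

lemma phi_psi2: "Pc R2 (Psi Q1 Q2) = Q2"
proof (rule set_eqI iffI)+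
  fix P assume "P \<in> Pc R2 (Psi Q1 Q2)"
  then obtain z where z: "z \<in> Psi Q1 Q2" "P = z \<inter> R2" "z \<inter> R2 \<noteq> {}" unfolding Pc_mem by blast
  then show "P \<in> Q2" using psi_B by blast
next
  fix P assume P: "P \<in> Q2"
  obtain z where z: "z \<in> Psi Q1 Q2" "z \<inter> R2 = P" using ex_psi_Y[OF P] by blast
  have "P \<noteq> {}" using ttile_nonempty q2t[OF P] by blast
  then show "P \<in> Pc R2 (Psi Q1 Q2)" using z unfolding Pc_mem by blast
qed

lemma psi_eqA: assumes z: "z \<in> Psi Q1 Q2" "z' \<in> Psi Q1 Q2" and e: "z \<inter> R1 = z' \<inter> R1" "z \<inter> R1 \<noteq> {}"
  shows "z = z'"
proof -
  have e2: "z' \<inter> R1 \<noteq> {}" using e by simp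
  have "z \<inter> R2 = z' \<inter> R2"
  proof (cases "z \<inter> R2 = {}")
    case False
    have Bin: "z \<inter> R2 \<in> Q2" using psi_B[OF z(1) False] .
    have "gl (z \<inter> R1) (z \<inter> R2)" using psi_gA[OF z(1) e(2) Bin] by simp
    then show ?thesis using psi_gA[OF z(2) e2 Bin] e(1) by simp
  next
    case True
    show ?thesis
    proof (rule ccontr)
      assume ne: "z \<inter> R2 \<noteq> z' \<inter> R2"
      then have F: "z' \<inter> R2 \<noteq> {}" using True by simp
      have Bin: "z' \<inter> R2 \<in> Q2" using psi_B[OF z(2) F] .
      have "gl (z' \<inter> R1) (z' \<inter> R2)" using psi_gA[OF z(2) e2 Bin] by simp
      then have "z' \<inter> R2 = z \<inter> R2" using psi_gA[OF z(1) e(2) Bin] e(1) by simp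
      then show False using ne by simp
    qed
  qed
  then show ?thesis using e(1) split_AB[of z] split_AB[of z'] by metis
qed

lemma psi_eqB: assumes z: "z \<in> Psi Q1 Q2" "z' \<in> Psi Q1 Q2" and e: "z \<inter> R2 = z' \<inter> R2" "z \<inter> R2 \<noteq> {}"
  shows "z = z'"
proof -
  have e2: "z' \<inter> R2 \<noteq> {}" using e by simp
  have "z \<inter> R1 = z' \<inter> R1"
  proof (cases "z \<inter> R1 = {}")
    case False
    have Ain: "z \<inter> R1 \<in> Q1" using psi_A[OF z(1) False] .
    have "gl (z \<inter> R1) (z \<inter> R2)" using psi_gB[OF z(1) e(2) Ain] by simp
    then show ?thesis using psi_gB[OF z(2) e2 Ain] e(1) by simp
  next
    case True
    show ?thesis
    proof (rule ccontr)
      assume ne: "z \<inter> R1 \<noteq> z' \<inter> R1"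
      then have F: "z' \<inter> R1 \<noteq> {}" using True by simp
      have Ain: "z' \<inter> R1 \<in> Q1" using psi_A[OF z(2) F] .
      have "gl (z' \<inter> R1) (z' \<inter> R2)" using psi_gB[OF z(2) e2 Ain] by simp
      then have "z' \<inter> R1 = z \<inter> R1" using psi_gB[OF z(1) e(2) Ain] e(1) by simp
      then show False using ne by simp
    qed
  qed
  then show ?thesis using e(1) split_AB[of z] split_AB[of z'] by metis
qed


lemma disjA: assumes z: "z \<in> Psi Q1 Q2" "z' \<in> Psi Q1 Q2" "z \<noteq> z'" shows "(z \<inter> R1) \<inter> (z' \<inter> R1) = {}"
proof (cases "z \<inter> R1 = {} \<or> z' \<inter> R1 = {}")
  case True then show ?thesis by blast
next
  case False
  then have a: "z \<inter> R1 \<in> Q1" "z' \<inter> R1 \<in> Q1" using psi_A z by blast+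
  have "z \<inter> R1 \<noteq> z' \<inter> R1" using psi_eqA[OF z(1,2)] False z(3) by blast
  then show ?thesis using TDR_A2[OF Q1 a] by blast
qed

lemma disjB: assumes z: "z \<in> Psi Q1 Q2" "z' \<in> Psi Q1 Q2" "z \<noteq> z'" shows "(z \<inter> R2) \<inter> (z' \<inter> R2) = {}"
proof (cases "z \<inter> R2 = {} \<or> z' \<inter> R2 = {}")
  case True then show ?thesis by blast
next
  case False
  then have a: "z \<inter> R2 \<in> Q2" "z' \<inter> R2 \<in> Q2" using psi_B z by blast+
  have "z \<inter> R2 \<noteq> z' \<inter> R2" using psi_eqB[OF z(1,2)] False z(3) by blast
  then show ?thesis using TDR_A2[OF Q2 a] by blast
qed

lemma psi_disj: assumes z: "z \<in> Psi Q1 Q2" "z' \<in> Psi Q1 Q2" "z \<noteq> z'" shows "z \<inter> z' = {}"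
  using disjA[OF z] disjB[OF z] by blast

lemma psi_tile: assumes z: "z \<in> Psi Q1 Q2" shows "is_ttile z \<and> z \<subseteq> Rg"
proof (cases "z \<inter> R1 = {}")
  case True
  then have e: "z = z \<inter> R2" by blast
  then have "z \<inter> R2 \<noteq> {}" using psi_ne[OF z] by simp
  then have "z \<inter> R2 \<in> Q2" by (rule psi_B[OF z])
  then show ?thesis using q2t e by (metis le_infE)
next
  case False
  then have A: "z \<inter> R1 \<in> Q1" by (rule psi_A[OF z])
  show ?thesis
  proof (cases "z \<inter> R2 = {}")
    case True
    then have e: "z = z \<inter> R1" by blast
    then show ?thesis using q1t[OF A] by (metis le_infE)
  next
    case F2: False
    then have B: "z \<inter> R2 \<in> Q2" by (rule psi_B[OF z])
    have g: "gl (z \<inter> R1) (z \<inter> R2)" using psi_gA[OF z False B] by simp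
    have "is_ttile ((z \<inter> R1) \<union> (z \<inter> R2))"
      by (rule merge) (use q1t[OF A] q2t[OF B] g in auto)
    moreover have "z \<subseteq> Rg" using q1t[OF A] q2t[OF B] split_AB[of z] by blast
    ultimately show ?thesis using split_AB[of z] by metis
  qed
qed

lemma psi_shift: assumes z: "z \<in> Psi Q1 Q2" and ne: "sh ` z \<inter> Rg \<noteq> {}"
  shows "\<exists>z'\<in>Psi Q1 Q2. z' \<noteq> z \<and> sh ` z \<subseteq> z'"
proof -
  let ?A = "z \<inter> R1" and ?B = "z \<inter> R2"
  have shA: "sh ` ?A \<subseteq> R1" and shB: "sh ` ?B \<subseteq> R2" by auto
  show ?thesis
  proof (cases "sh ` ?A \<inter> (Rg \<inter> R1) \<noteq> {}")
    case True
    then have Ane: "?A \<noteq> {}" by blast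
    have A: "?A \<in> Q1" by (rule psi_A[OF z Ane])
    obtain X' where X': "X' \<in> Q1" "X' \<noteq> ?A" "sh ` ?A \<subseteq> X'" using TDR_A3[OF Q1 A True] by blast
    obtain z' where z': "z' \<in> Psi Q1 Q2" "z' \<inter> R1 = X'" using ex_psi_X[OF X'(1)] by blast
    have X'ne: "X' \<noteq> {}" using ttile_nonempty q1t[OF X'(1)] by blast
    have "z' \<noteq> z" using z' X'(2) by blast
    moreover have "sh ` ?B \<subseteq> z'"
    proof (cases "?B = {}")
      case True then show ?thesis by simp
    next
      case False
      have B: "?B \<in> Q2" by (rule psi_B[OF z False])
      have g: "gl ?A ?B" using psi_gA[OF z Ane B] by simp
      then obtain c where c: "bnd c" "(c, False) \<in> ?A" "(c, True) \<in> ?B" unfolding gl_def by blast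
      define c' where "c' = (fst c + 1, snd c - 1)"
      have shF: "sh (c, False) = (c', False)" and shT: "sh (c, True) = (c', True)" by (simp_all add: sh_def c'_def)
      have bc': "bnd c'" unfolding c'_def using bnd_sh[OF c(1)] .
      have "(c', False) \<in> X'" using X'(3) c(2) shF by (metis imageI subsetD)
      then have "(c', False) \<in> Rg" using q1t[OF X'(1)] by blast
      moreover have "(c, True) \<in> Rg" using c(3) q2t[OF B] by blast
      then have "lam2 \<noteq> []" using rg_lam2 c(1) by blast
      ultimately have "(c', True) \<in> Rg" using bnd_F_T bc' unfolding bnd_def by blast
      moreover have "(c', True) \<in> sh ` ?B" using c(3) shT by (metis imageI)
      ultimately have "sh ` ?B \<inter> (Rg \<inter> R2) \<noteq> {}" using shB by blast
      then obtain Y' where Y': "Y' \<in> Q2" "sh ` ?B \<subseteq> Y'" using TDR_A3[OF Q2 B] by blast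
      have "(c', True) \<in> Y'" using Y'(2) c(3) shT by (metis imageI subsetD)
      then have "gl X' Y'" unfolding gl_def using bc' \<open>(c', False) \<in> X'\<close> by blast
      then have "Y' = z' \<inter> R2" using psi_gA[OF z'(1) _ Y'(1)] z'(2) X'ne by simp
      then show ?thesis using Y'(2) by blast
    qed
    moreover have "sh ` ?A \<subseteq> z'" using X'(3) z'(2) by blast
    ultimately have "sh ` z \<subseteq> z'" using split_AB[of z] by (metis image_Un le_sup_iff)
    then show ?thesis using z' \<open>z' \<noteq> z\<close> by blast
  next
    case False
    have "sh ` ?B \<inter> (Rg \<inter> R2) \<noteq> {}"
    proof -
      obtain u where u: "u \<in> z" "sh u \<in> Rg" using ne by blast
      have "\<not> st u < int m" using u False by auto
      then have "sh u \<in> sh ` ?B \<inter> (Rg \<inter> R2)" using u by auto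
      then show ?thesis by blast
    qed
    then have Bne: "?B \<noteq> {}" by blast
    have B: "?B \<in> Q2" by (rule psi_B[OF z Bne])
    obtain Y' where Y': "Y' \<in> Q2" "Y' \<noteq> ?B" "sh ` ?B \<subseteq> Y'" using TDR_A3[OF Q2 B] \<open>sh ` ?B \<inter> (Rg \<inter> R2) \<noteq> {}\<close> by blast
    have Ae: "?A = {}"
    proof (rule ccontr)
      assume Ane: "?A \<noteq> {}"
      have A: "?A \<in> Q1" by (rule psi_A[OF z Ane])
      have g: "gl ?A ?B" using psi_gA[OF z Ane B] by simp
      then obtain c where c: "bnd c" "(c, False) \<in> ?A" "(c, True) \<in> ?B" unfolding gl_def by blast
      define c' where "c' = (fst c + 1, snd c - 1)"
      have shF: "sh (c, False) = (c', False)" and shT: "sh (c, True) = (c', True)" by (simp_all add: sh_def c'_def)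
      have bc': "bnd c'" unfolding c'_def using bnd_sh[OF c(1)] .
      have "(c', True) \<in> Y'" using Y'(3) c(3) shT by (metis imageI subsetD)
      then have "(c', True) \<in> Rg" using q2t[OF Y'(1)] by blast
      moreover have "(c, False) \<in> Rg" using c(2) q1t[OF A] by blast
      then have "1 \<le> m" using rg_m1 c(1) by blast
      ultimately have "(c', False) \<in> Rg" using bnd_T_F bc' unfolding bnd_def by blast
      moreover have "(c', False) \<in> sh ` ?A" using c(2) shF by (metis imageI)
      ultimately have "sh ` ?A \<inter> (Rg \<inter> R1) \<noteq> {}" using shA by blast
      then show False using False by blast
    qed
    obtain z' where z': "z' \<in> Psi Q1 Q2" "z' \<inter> R2 = Y'" using ex_psi_Y[OF Y'(1)] by blast
    have "z' \<noteq> z" using z' Y'(2) by blast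
    moreover have "sh ` z \<subseteq> z'" using Ae Y'(3) z'(2) split_AB[of z] by (metis Un_empty_left le_infE)
    ultimately show ?thesis using z'(1) by blast
  qed
qed

lemma psi_border: assumes z: "z \<in> Psi Q1 Q2" "z' \<in> Psi Q1 Q2" "z \<noteq> z'"
  and c: "diag_border z c" "diag_border z' c" shows False
proof -
  have dis: "z \<inter> z' = {}" by (rule psi_disj[OF z])
  consider (lo) "fst c + snd c + 1 < int m" | (hi) "\<not> fst c + snd c < int m" | (bd) "fst c + snd c = int m - 1"
    by linarith
  then show False
  proof cases
    case lo
    have inR: "(c, False) \<in> R1" "(c, True) \<in> R1" using lo by (simp_all add: st_def)
    have d1: "diag_border (z \<inter> R1) c" using c(1) inR unfolding diag_border_def by blast
    have d2: "diag_border (z' \<inter> R1) c" using c(2) inR unfolding diag_border_def by blast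
    have n1: "z \<inter> R1 \<noteq> {}" using d1 unfolding diag_border_def by blast
    have n2: "z' \<inter> R1 \<noteq> {}" using d2 unfolding diag_border_def by blast
    have "z \<inter> R1 \<noteq> z' \<inter> R1" using psi_eqA[OF z(1,2)] n1 z(3) by blast
    then show False using TDR_A4[OF Q1 psi_A[OF z(1) n1] psi_A[OF z(2) n2] _ d1 d2] by blast
  next
    case hi
    have inR: "(c, False) \<in> R2" "(c, True) \<in> R2" using hi by (simp_all add: st_def)
    have d1: "diag_border (z \<inter> R2) c" using c(1) inR unfolding diag_border_def by blast
    have d2: "diag_border (z' \<inter> R2) c" using c(2) inR unfolding diag_border_def by blast
    have n1: "z \<inter> R2 \<noteq> {}" using d1 unfolding diag_border_def by blast
    have n2: "z' \<inter> R2 \<noteq> {}" using d2 unfolding diag_border_def by blast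
    have "z \<inter> R2 \<noteq> z' \<inter> R2" using psi_eqB[OF z(1,2)] n1 z(3) by blast
    then show False using TDR_A4[OF Q2 psi_B[OF z(1) n1] psi_B[OF z(2) n2] _ d1 d2] by blast
  next
    case bd
    have b: "bnd c" using bd by (simp add: bnd_def)
    have inR: "(c, False) \<in> R1" "(c, True) \<in> R2" using bd by (simp_all add: st_def)
    have key: "False" if w: "w \<in> Psi Q1 Q2" "w' \<in> Psi Q1 Q2" "(c, False) \<in> w" "(c, True) \<notin> w" "(c, True) \<in> w'"
      for w w'
    proof -
      have wA: "w \<inter> R1 \<noteq> {}" using w(3) inR by blast
      have wB': "w' \<inter> R2 \<noteq> {}" using w(5) inR by blast
      have "gl (w \<inter> R1) (w' \<inter> R2)" unfolding gl_def using b w(3,5) inR by blast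
      then have "w' \<inter> R2 = w \<inter> R2" using psi_gA[OF w(1) wA psi_B[OF w(2) wB']] by simp
      then show False using w(4,5) inR by blast
    qed
    show False
    proof (cases "(c, False) \<in> z")
      case True
      then have "(c, True) \<notin> z" using c(1) unfolding diag_border_def by blast
      moreover have "(c, False) \<notin> z'" using True dis by blast
      then have "(c, True) \<in> z'" using c(2) unfolding diag_border_def by blast
      ultimately show False using key[OF z(1,2) True] by blast
    next
      case False
      then have T1: "(c, True) \<in> z" using c(1) unfolding diag_border_def by blast
      then have "(c, True) \<notin> z'" using dis by blast
      then have "(c, False) \<in> z'" using c(2) unfolding diag_border_def by blast
      then show False using key[OF z(2,1)] \<open>(c, True) \<notin> z'\<close> T1 by blast
    qed
  qed
qed

lemma Psi_TDR: "Psi Q1 Q2 \<in> TDR Rg"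
  unfolding TDR_def mem_Collect_eq
  by (intro conjI ballI impI psi_tile psi_disj psi_shift notI) (auto dest: psi_border)

end
end


context S begin

lemma reg1_eq: "Rg \<inter> R1 = region lam1 a mu1" using reg1 by blast

lemma reg2_eq: "Rg \<inter> R2 = tr (int n1) ` region lam2 i mu2"
proof (rule set_eqI iffI)+
  fix hc assume "hc \<in> Rg \<inter> R2"
  then have "tr (- int n1) hc \<in> region lam2 i mu2" using reg2 by blast
  moreover have "hc = tr (int n1) (tr (- int n1) hc)" by simp
  ultimately show "hc \<in> tr (int n1) ` region lam2 i mu2" by blast
next
  fix hc assume "hc \<in> tr (int n1) ` region lam2 i mu2"
  then obtain h where h: "h \<in> region lam2 i mu2" "hc = tr (int n1) h" by blast
  then have "tr (- int n1) hc \<in> region lam2 i mu2" by simp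
  then show "hc \<in> Rg \<inter> R2" using reg2 by blast
qed

lemma reg2_eq': "tr (- int n1) ` (Rg \<inter> R2) = region lam2 i mu2"
  unfolding reg2_eq image_image by simp

lemma trtr_set: "(\<lambda>e. tr d ` e) ` (\<lambda>e. tr (- d) ` e) ` Q = Q"
  by (simp add: image_image)
lemma trtr_set': "(\<lambda>e. tr (- d) ` e) ` (\<lambda>e. tr d ` e) ` Q = Q"
  by (simp add: image_image)

lemma TD2_iff: "T2 \<in> TD lam2 i mu2 \<longleftrightarrow> (\<lambda>e. tr (int n1) ` e) ` T2 \<in> TDR (Rg \<inter> R2)"
proof
  assume "T2 \<in> TD lam2 i mu2"
  then have "T2 \<in> TDR (region lam2 i mu2)" by (simp add: TD_TDR)
  then have "(\<lambda>e. tr (int n1) ` e) ` T2 \<in> TDR (tr (int n1) ` region lam2 i mu2)" by (rule TDR_tr)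
  then show "(\<lambda>e. tr (int n1) ` e) ` T2 \<in> TDR (Rg \<inter> R2)" by (simp add: reg2_eq)
next
  assume "(\<lambda>e. tr (int n1) ` e) ` T2 \<in> TDR (Rg \<inter> R2)"
  then have "(\<lambda>e. tr (- int n1) ` e) ` (\<lambda>e. tr (int n1) ` e) ` T2 \<in> TDR (tr (- int n1) ` (Rg \<inter> R2))" by (rule TDR_tr)
  then show "T2 \<in> TD lam2 i mu2" unfolding trtr_set' reg2_eq' by (simp add: TD_TDR)
qed

lemma phi_into: assumes T: "T \<in> TDR Rg"
  shows "Pc R1 T \<in> TDR (Rg \<inter> R1)" and "Pc R2 T \<in> TDR (Rg \<inter> R2)"
proof -
  have tile: "is_ttile e" if "e \<in> T" for e using TDR_A1[OF T that] by blast
  show "Pc R1 T \<in> TDR (Rg \<inter> R1)"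
  proof (rule Pc_TDR[OF T])
    show "sh ` R1 \<subseteq> R1" by auto
    fix e assume e: "e \<in> T" "e \<inter> R1 \<noteq> {}"
    show "is_ttile (e \<inter> R1)"
    proof (cases "e \<inter> R2 = {}")
      case True
      then have "e \<inter> R1 = e" by blast
      then show ?thesis using tile[OF e(1)] by simp
    next
      case False then show ?thesis using Hcross[OF T e(1) e(2)] by blast
    qed
  qed
  show "Pc R2 T \<in> TDR (Rg \<inter> R2)"
  proof (rule Pc_TDR[OF T])
    show "sh ` R2 \<subseteq> R2" by auto
    fix e assume e: "e \<in> T" "e \<inter> R2 \<noteq> {}"
    show "is_ttile (e \<inter> R2)"
    proof (cases "e \<inter> R1 = {}")
      case True
      then have "e \<inter> R2 = e" by blast
      then show ?thesis using tile[OF e(1)] by simp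
    next
      case False then show ?thesis using Hcross[OF T e(1) False e(2)] by blast
    qed
  qed
qed

definition phi :: "halfcell set set \<Rightarrow> halfcell set set \<times> halfcell set set" where
  "phi T = (Pc R1 T, (\<lambda>e. tr (- int n1) ` e) ` Pc R2 T)"

definition psi :: "halfcell set set \<times> halfcell set set \<Rightarrow> halfcell set set" where
  "psi p = Psi (fst p) ((\<lambda>e. tr (int n1) ` e) ` snd p)"

lemma phi_bij: "bij_betw phi (TDR Rg) (TD lam1 a mu1 \<times> TD lam2 i mu2)"
proof (rule bij_betw_byWitness[where f' = psi])
  show "\<forall>T\<in>TDR Rg. psi (phi T) = T"
    unfolding psi_def phi_def by (simp add: trtr_set psi_phi)
  show "\<forall>p\<in>TD lam1 a mu1 \<times> TD lam2 i mu2. phi (psi p) = p"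
  proof
    fix p assume p: "p \<in> TD lam1 a mu1 \<times> TD lam2 i mu2"
    have "fst p \<in> TD lam1 a mu1" using p by (simp add: mem_Times_iff)
    then have Q1: "fst p \<in> TDR (Rg \<inter> R1)" unfolding TD_TDR reg1_eq .
    have "snd p \<in> TD lam2 i mu2" using p by (simp add: mem_Times_iff)
    then have Q2: "(\<lambda>e. tr (int n1) ` e) ` snd p \<in> TDR (Rg \<inter> R2)" using TD2_iff by blast
    show "phi (psi p) = p"
      unfolding phi_def psi_def using phi_psi1[OF Q1 Q2] phi_psi2[OF Q1 Q2] by (simp add: trtr_set')
  qed
  show "phi ` TDR Rg \<subseteq> TD lam1 a mu1 \<times> TD lam2 i mu2"
  proof
    fix q assume "q \<in> phi ` TDR Rg"
    then obtain T where T: "T \<in> TDR Rg" "q = phi T" by blast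
    have "Pc R1 T \<in> TD lam1 a mu1" using phi_into(1)[OF T(1)] unfolding TD_TDR reg1_eq .
    moreover have "(\<lambda>e. tr (- int n1) ` e) ` Pc R2 T \<in> TD lam2 i mu2"
      unfolding TD2_iff trtr_set using phi_into(2)[OF T(1)] .
    ultimately show "q \<in> TD lam1 a mu1 \<times> TD lam2 i mu2" unfolding T(2) phi_def by simp
  qed
  show "psi ` (TD lam1 a mu1 \<times> TD lam2 i mu2) \<subseteq> TDR Rg"
  proof
    fix T assume "T \<in> psi ` (TD lam1 a mu1 \<times> TD lam2 i mu2)"
    then obtain p where p: "p \<in> TD lam1 a mu1 \<times> TD lam2 i mu2" "T = psi p" by blast
    have "fst p \<in> TD lam1 a mu1" using p by (simp add: mem_Times_iff)
    then have Q1: "fst p \<in> TDR (Rg \<inter> R1)" unfolding TD_TDR reg1_eq .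
    have "snd p \<in> TD lam2 i mu2" using p by (simp add: mem_Times_iff)
    then have Q2: "(\<lambda>e. tr (int n1) ` e) ` snd p \<in> TDR (Rg \<inter> R2)" using TD2_iff by blast
    show "T \<in> TDR Rg" unfolding p(2) psi_def by (rule Psi_TDR[OF Q1 Q2])
  qed
qed

lemma Union_Pc: "\<Union>(Pc U T) = \<Union>T \<inter> U"
  unfolding Pc_def by blast

lemma phi_norm: assumes T: "T \<in> TDR Rg"
  shows "tnorm T = tnorm (fst (phi T)) + tnorm (snd (phi T))"
proof -
  have fR: "finite Rg" by (rule region_finite)
  have sub: "\<Union>T \<subseteq> Rg" using TDR_A1[OF T] by blast
  then have fU: "finite (\<Union>T)" using fR finite_subset by blast
  have n0: "4 * tnorm T = card (\<Union>T)" by (rule TDR_tnorm[OF fR T])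
  have n1: "4 * tnorm (Pc R1 T) = card (\<Union>T \<inter> R1)"
    using TDR_tnorm[OF _ phi_into(1)[OF T]] fR Union_Pc by simp
  have T2: "(\<lambda>e. tr (- int n1) ` e) ` Pc R2 T \<in> TD lam2 i mu2"
    unfolding TD2_iff trtr_set using phi_into(2)[OF T] .
  have "4 * tnorm ((\<lambda>e. tr (- int n1) ` e) ` Pc R2 T) = card (\<Union>((\<lambda>e. tr (- int n1) ` e) ` Pc R2 T))"
    using TDR_tnorm[OF region_finite T2[unfolded TD_TDR]] .
  also have "\<Union>((\<lambda>e. tr (- int n1) ` e) ` Pc R2 T) = tr (- int n1) ` (\<Union>T \<inter> R2)"
    by (simp only: image_Union[symmetric] Union_Pc)
  also have "card \<dots> = card (\<Union>T \<inter> R2)" by (rule card_image) (rule inj_on_subset[OF inj_tr], simp)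
  finally have n2: "4 * tnorm ((\<lambda>e. tr (- int n1) ` e) ` Pc R2 T) = card (\<Union>T \<inter> R2)" .
  have "card (\<Union>T) = card (\<Union>T \<inter> R1) + card (\<Union>T \<inter> R2)"
  proof -
    have "\<Union>T = (\<Union>T \<inter> R1) \<union> (\<Union>T \<inter> R2)" by blast
    then have "card (\<Union>T) = card ((\<Union>T \<inter> R1) \<union> (\<Union>T \<inter> R2))" by simp
    also have "\<dots> = card (\<Union>T \<inter> R1) + card (\<Union>T \<inter> R2)"
      by (rule card_Un_disjoint) (use fU in auto)
    finally show ?thesis .
  qed
  then show ?thesis using n0 n1 n2 unfolding phi_def by simp
qed

end

theorem lemma3p6:
  fixes lam1 lam2 mu1 mu2 :: "bool list" and n1 n2 a b i :: nat
  assumes "lam1 \<in> Dyck (2 * n1)" and "lam2 \<in> Dyck (2 * n2)"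
    and "mu1 \<in> Lpaths lam1 a i" and "mu2 \<in> Lpaths lam2 i b"
  shows "\<exists>\<phi>. bij_betw \<phi> (TD (lam1 @ lam2) a (mu1 @ mu2)) (TD lam1 a mu1 \<times> TD lam2 i mu2)
           \<and> (\<forall>T\<in>TD (lam1 @ lam2) a (mu1 @ mu2).
                 tnorm T = tnorm (fst (\<phi> T)) + tnorm (snd (\<phi> T)))"
proof -
  interpret S lam1 lam2 mu1 mu2 n1 n2 a b i using assms by unfold_locales
  show ?thesis
    using phi_bij phi_norm unfolding TD_TDR[of lam a mu] by blast
qed


end
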